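(* Let $0\le m\le k-1$ and $e\ge 1$ be integers, let $H$ be an $m$-graph on $[k]$ with $l=|E(H)|$ edges, and put $n=e(k-m)+m$ and $f=e(l-1)+1$. Let $Y$ be the set of $H$-built-trees on $[n]$ with $e$ edges that are rooted at $[m]$. Let $A=[e]$, $B=[e]\times[l-1]$, $C=\{[m]\}$, let $\gamma:B\to A$ be the projection to the first coordinate, and for $i\in[e]$ let $X_i=\left[\binom{(k-m)(e-i+1)-1}{k-m-1}\right]$. Then there is a bijection between $Y$ and $$Z=F(A,B,C,\gamma)\times\prod_{i=1}^e\left(X_i\times \mathcal R_H\right).$$ In particular, $$|Y|=f^{e-1}\left(\frac{k!\,l}{\binom km\,|\mathrm{Aut}(H)|}\right)^e\prod_{i=1}^e\binom{(k-m)(e-i+1)-1}{k-m-1}=\frac{(e(k-m))!\,f^{e-1}}{e!}\left(\frac{m!\,l}{|\mathrm{Aut}(H)|}\right)^e.$$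
   Context: For a positive integer $r$, $[r]=\{1,\dots,r\}$, $[0]=\emptyset$, and $[a,b]=\{a,\dots,b\}$. An $r$-graph on a set $V$ is a set of $r$-element subsets (edges) of $V$. Cycle-free functions: given disjoint finite sets $A,B,C$ and a surjection $\gamma:B\to A$, a function $f:A\to B\cup C$ is cycle-free if for every $b\in B$ the sequence $b,(f\circ\gamma)(b),(f\circ\gamma)^2(b),\dots$ eventually reaches an element of $C$ (where the iteration stops); $F(A,B,C,\gamma)$ denotes the set of all cycle-free functions $A\to B\cup C$. $(k,m)$-trees: with vertex set $[n]$, a non-empty $k$-graph without isolated vertices is a $(k,m)$-tree if its edges can be ordered $E_1,\dots,E_e$ so that for every $i\in[2,e]$ there is $j\in[i-1]$ with $|E_i\cap E_j|=m$ and $(E_i\setminus E_j)\cap\bigcup_{h=1}^{i-1}E_h=\emptyset$. An $m$-subset is called a lap. For an $m$-graph $H$ on $[k]$ and a $k$-set $E$, an $H$-graph on $E$ is the image of $H$ under some bijection $[k]\to E$. An $H$-built-tree $(T,\{H_1,\dots,H_e\})$ consists of a $(k,m)$-tree $T$ with edges $E_1,\dots,E_e$ together with $H$-graphs $H_i$ on $E_i$ ($i\in[e]$) such that for all distinct $i,j\in[e]$, if $|E_i\cap E_j|=m$ then $E_i\cap E_j$ is an edge of both $H_i$ and $H_j$. It has $n=e(k-m)+m$ vertices. It is rooted at an $m$-set $L$ if $L\in\bigcup_{i\in[e]}E(H_i)$. $\mathcal R_H$ denotes the set of distinct $H$-graphs on $[k]$ containing $[m]$ as an edge (so $|\mathcal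 R_H|=k!\,l/(|\mathrm{Aut}(H)|\binom km)$), and $\mathrm{Aut}(H)$ is the automorphism group of $H$ (permutations of $[k]$ preserving $E(H)$). *)

theory Defs
  imports Complex_Main "HOL-Library.FuncSet" "HOL-Combinatorics.Permutations"
begin

definition rgraph :: "nat \<Rightarrow> 'a set \<Rightarrow> 'a set set \<Rightarrow> bool" where
  "rgraph r V G \<longleftrightarrow> (\<forall>E\<in>G. E \<subseteq> V \<and> card E = r)"

fun cf_step :: "('a \<Rightarrow> 'b + 'c) \<Rightarrow> ('b \<Rightarrow> 'a) \<Rightarrow> 'b + 'c \<Rightarrow> 'b + 'c" where
  "cf_step f \<gamma> (Inl b) = f (\<gamma> b)"
| "cf_step f \<gamma> (Inr c) = Inr c"

definition cycle_free_funs ::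
  "'a set \<Rightarrow> 'b set \<Rightarrow> 'c set \<Rightarrow> ('b \<Rightarrow> 'a) \<Rightarrow> ('a \<Rightarrow> 'b + 'c) set" where
  "cycle_free_funs A B C \<gamma> =
     {f \<in> A \<rightarrow>\<^sub>E (Inl ` B \<union> Inr ` C).
        \<forall>b\<in>B. \<exists>t c. (cf_step f \<gamma> ^^ t) (Inl b) = Inr c}"

text \<open>(k,m)-trees on vertex set [n] (edges listed in a valid order, 0-based).\<close>
definition km_tree :: "nat \<Rightarrow> nat \<Rightarrow> nat \<Rightarrow> nat set set \<Rightarrow> bool" where
  "km_tree k m n T \<longleftrightarrow>
     T \<noteq> {} \<and> rgraph k {1..n} T \<and> \<Union>T = {1..n} \<and>
     (\<exists>Es. distinct Es \<and> set Es = T \<and>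
        (\<forall>i. 1 \<le> i \<and> i < length Es \<longrightarrow>
           (\<exists>j<i. card (Es ! i \<inter> Es ! j) = m \<and>
                  (Es ! i - Es ! j) \<inter> \<Union>(set (take i Es)) = {})))"

definition H_graph_on :: "nat \<Rightarrow> nat set set \<Rightarrow> nat set \<Rightarrow> nat set set \<Rightarrow> bool" where
  "H_graph_on k H E G \<longleftrightarrow> (\<exists>\<sigma>. bij_betw \<sigma> {1..k} E \<and> G = (\<lambda>L. \<sigma> ` L) ` H)"

definition H_built_tree ::
  "nat \<Rightarrow> nat \<Rightarrow> nat set set \<Rightarrow> nat \<Rightarrow> nat set set \<Rightarrow> (nat set \<Rightarrow> nat set set) \<Rightarrow> bool" where
  "H_built_tree k m H n T Hs \<longleftrightarrow>
     km_tree k m n T \<and>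
     (\<forall>E\<in>T. H_graph_on k H E (Hs E)) \<and>
     (\<forall>E. E \<notin> T \<longrightarrow> Hs E = {}) \<and>
     (\<forall>E\<in>T. \<forall>E'\<in>T. E \<noteq> E' \<and> card (E \<inter> E') = m \<longrightarrow>
          E \<inter> E' \<in> Hs E \<and> E \<inter> E' \<in> Hs E')"

definition rooted_at :: "nat set set \<Rightarrow> (nat set \<Rightarrow> nat set set) \<Rightarrow> nat set \<Rightarrow> bool" where
  "rooted_at T Hs L \<longleftrightarrow> L \<in> (\<Union>E\<in>T. Hs E)"

definition R_H :: "nat \<Rightarrow> nat \<Rightarrow> nat set set \<Rightarrow> nat set set set" where
  "R_H k m H = {G. H_graph_on k H {1..k} G \<and> {1..m} \<in> G}"

definition Aut :: "nat \<Rightarrow> nat set set \<Rightarrow> (nat \<Rightarrow> nat) set" where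
  "Aut k H = {\<sigma>. \<sigma> permutes {1..k} \<and> (\<lambda>L. \<sigma> ` L) ` H = H}"

end

theory Submission
  imports Defs
begin

lemma cf_alg:
  fixes c x p :: nat
  shows "(\<Sum>s\<in>{1..Suc p}. (Suc p choose s) * c^s * (if s = Suc p then 1 else x*s*(x*Suc p)^(Suc p-s-1)))
       = c*(c+x*Suc p)^p"
proof -
  define X where "X = x * Suc p"
  have trm: "(Suc p choose s) * c^s * (if s = Suc p then 1 else x*s*(x*Suc p)^(Suc p-s-1))
      = (p choose (s-1)) * c^s * X^(Suc p - s)" if "s \<in> {1..Suc p}" for s
  proof (cases "s = Suc p")
    case True then show ?thesis by simp
  next
    case False
    with that have s: "1 \<le> s" "s \<le> p" by auto
    have e1: "s * (Suc p choose s) = Suc p * (p choose (s - 1))"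
      using times_binomial_minus1_eq[of s "Suc p"] s by simp
    have "Suc p - s = Suc (Suc p - s - 1)" using s by simp
    then have e2: "X^(Suc p - s) = X * X^(Suc p - s - 1)"
      by (metis power_Suc)
    have "(Suc p choose s) * c^s * (x*s*(x*Suc p)^(Suc p-s-1))
        = (s * (Suc p choose s)) * c^s * x * X^(Suc p - s - 1)"
      by (simp add: X_def)
    also have "\<dots> = (p choose (s-1)) * c^s * X^(Suc p - s)"
      unfolding e1 e2 by (simp add: X_def algebra_simps)
    finally show ?thesis using False by simp
  qed
  have "(\<Sum>s\<in>{1..Suc p}. (Suc p choose s) * c^s * (if s = Suc p then 1 else x*s*(x*Suc p)^(Suc p-s-1)))
      = (\<Sum>s\<in>{1..Suc p}. (p choose (s-1)) * c^s * X^(Suc p - s))"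
    by (rule sum.cong) (auto simp: trm)
  also have "\<dots> = (\<Sum>j\<in>{0..p}. (p choose j) * c^(Suc j) * X^(p - j))"
  proof -
    have eq: "{1..Suc p} = Suc ` {0..p}" by auto
    show ?thesis unfolding eq by (subst sum.reindex) auto
  qed
  also have "\<dots> = c * (\<Sum>j\<le>p. (p choose j) * c^j * X^(p - j))"
    by (simp add: sum_distrib_left atLeast0AtMost algebra_simps)
  also have "\<dots> = c * (c + X)^p" by (simp add: binomial_ring)
  finally show ?thesis by (simp add: X_def)
qed

definition stp :: "('a \<Rightarrow> 'd) \<Rightarrow> ('d \<Rightarrow> 'a) \<Rightarrow> 'd set \<Rightarrow> 'd \<Rightarrow> 'd" where
  "stp f \<gamma> B y = (if y \<in> B then f (\<gamma> y) else y)"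

definition cfree :: "'a set \<Rightarrow> 'd set \<Rightarrow> 'd set \<Rightarrow> ('d \<Rightarrow> 'a) \<Rightarrow> ('a \<Rightarrow> 'd) set" where
  "cfree A B C \<gamma> = {f \<in> A \<rightarrow>\<^sub>E (B \<union> C). \<forall>b\<in>B. \<exists>t. (stp f \<gamma> B ^^ t) b \<in> C}"

lemma funpow_Suc_right': "(g ^^ Suc t) y = (g ^^ t) (g y)"
  by (simp add: funpow_Suc_right del: funpow.simps)

lemma reach_some_root:
  assumes "f \<in> A \<rightarrow>\<^sub>E (B \<union> C)" "B \<inter> C = {}" "\<gamma> ` B \<subseteq> A"
  shows "b \<in> B \<Longrightarrow> (stp f \<gamma> B ^^ t) b \<in> C \<Longrightarrow> \<exists>a\<in>A. f a \<in> C"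
proof (induction t arbitrary: b)
  case 0 then show ?case using assms by auto
next
  case (Suc t)
  have st: "stp f \<gamma> B b = f (\<gamma> b)" using Suc.prems by (simp add: stp_def)
  have gb: "\<gamma> b \<in> A" using assms Suc.prems by auto
  have fb: "f (\<gamma> b) \<in> B \<union> C" using assms(1) gb by auto
  show ?case
  proof (cases "f (\<gamma> b) \<in> C")
    case True then show ?thesis using gb by auto
  next
    case False
    then have "f (\<gamma> b) \<in> B" using fb by auto
    moreover have "(stp f \<gamma> B ^^ t) (f (\<gamma> b)) \<in> C"
      using Suc.prems(2) by (simp only: funpow_Suc_right' st)
    ultimately show ?thesis by (rule Suc.IH)
  qed
qed

lemma reach_restrict1:
  assumes f: "f \<in> A \<rightarrow>\<^sub>E (B \<union> C)" and S: "S = {a\<in>A. f a \<in> C}"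
    and g: "\<gamma> ` B \<subseteq> A" and BC: "B \<inter> C = {}"
    and that: "\<And>a. a \<in> A - S \<Longrightarrow> f' a = f a"
  shows "b \<in> B \<Longrightarrow> (stp f \<gamma> B ^^ t) b \<in> C \<Longrightarrow>
     \<exists>t'. (stp f' \<gamma> {b\<in>B. \<gamma> b \<notin> S} ^^ t') b \<in> {b\<in>B. \<gamma> b \<in> S}"
proof (induction t arbitrary: b)
  case 0 then show ?case using BC by auto
next
  case (Suc t)
  show ?case
  proof (cases "\<gamma> b \<in> S")
    case True then show ?thesis using Suc.prems by (intro exI[of _ 0]) auto
  next
    case False
    have gb: "\<gamma> b \<in> A - S" using False Suc.prems g by auto
    have fb: "f (\<gamma> b) \<in> B" using gb f S by auto
    have st: "stp f \<gamma> B b = f (\<gamma> b)" using Suc.prems by (simp add: stp_def)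
    have st': "stp f' \<gamma> {b\<in>B. \<gamma> b \<notin> S} b = f (\<gamma> b)"
      using Suc.prems False that gb by (simp add: stp_def)
    from Suc.prems(2) have "(stp f \<gamma> B ^^ t) (f (\<gamma> b)) \<in> C"
      by (simp only: funpow_Suc_right' st)
    from Suc.IH[OF fb this] obtain t' where
      "(stp f' \<gamma> {b\<in>B. \<gamma> b \<notin> S} ^^ t') (f (\<gamma> b)) \<in> {b\<in>B. \<gamma> b \<in> S}" by blast
    then show ?thesis
      by (intro exI[of _ "Suc t'"]) (simp only: funpow_Suc_right' st')
  qed
qed

lemma reach_restrict2:
  assumes S: "\<And>a. a \<in> S \<Longrightarrow> f a \<in> C" and SA: "S \<subseteq> A"
    and g: "\<gamma> ` B \<subseteq> A" and BC: "B \<inter> C = {}"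
    and f'B: "\<And>a. a \<in> A - S \<Longrightarrow> f' a \<in> B"
    and eq: "\<And>a. a \<in> A - S \<Longrightarrow> f' a = f a"
  shows "b \<in> B \<Longrightarrow> (stp f' \<gamma> {b\<in>B. \<gamma> b \<notin> S} ^^ t) b \<in> {b\<in>B. \<gamma> b \<in> S} \<Longrightarrow>
     \<exists>t'. (stp f \<gamma> B ^^ t') b \<in> C"
proof (induction t arbitrary: b)
  case 0
  then have "stp f \<gamma> B b \<in> C" using S by (simp add: stp_def)
  then show ?case by (intro exI[of _ 1]) simp
next
  case (Suc t)
  show ?case
  proof (cases "\<gamma> b \<in> S")
    case True
    then have "stp f \<gamma> B b \<in> C" using S Suc.prems by (simp add: stp_def)
    then show ?thesis by (intro exI[of _ 1]) simp
  next
    case False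
    have gb: "\<gamma> b \<in> A - S" using False Suc.prems g by auto
    have st: "stp f \<gamma> B b = f (\<gamma> b)" using Suc.prems by (simp add: stp_def)
    have st': "stp f' \<gamma> {b\<in>B. \<gamma> b \<notin> S} b = f (\<gamma> b)"
      using Suc.prems False eq gb by (simp add: stp_def)
    have fb: "f (\<gamma> b) \<in> B" using f'B[OF gb] eq[OF gb] by simp
    from Suc.prems(2) have "(stp f' \<gamma> {b\<in>B. \<gamma> b \<notin> S} ^^ t) (f (\<gamma> b)) \<in> {b\<in>B. \<gamma> b \<in> S}"
      by (simp only: funpow_Suc_right' st')
    from Suc.IH[OF fb this] obtain t' where "(stp f \<gamma> B ^^ t') (f (\<gamma> b)) \<in> C" by blast
    then show ?thesis by (intro exI[of _ "Suc t'"]) (simp only: funpow_Suc_right' st)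
  qed
qed

lemma sum_subsets_card:
  fixes \<phi> :: "nat \<Rightarrow> nat"
  assumes "finite A"
  shows "(\<Sum>S\<in>{S. S \<subseteq> A \<and> S \<noteq> {}}. \<phi> (card S)) = (\<Sum>s\<in>{1..card A}. (card A choose s) * \<phi> s)"
proof -
  have eq: "{S. S \<subseteq> A \<and> S \<noteq> {}} = (\<Union>s\<in>{1..card A}. {S. S \<subseteq> A \<and> card S = s})"
  proof (intro equalityI subsetI)
    fix S assume "S \<in> {S. S \<subseteq> A \<and> S \<noteq> {}}"
    then have "S \<subseteq> A" "S \<noteq> {}" by auto
    moreover have "finite S" using \<open>S \<subseteq> A\<close> assms finite_subset by blast
    ultimately have "card S \<in> {1..card A}"
      using card_mono[OF assms] by (auto simp: Suc_le_eq card_gt_0_iff)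
    then show "S \<in> (\<Union>s\<in>{1..card A}. {S. S \<subseteq> A \<and> card S = s})" using \<open>S \<subseteq> A\<close> by auto
  next
    fix S assume "S \<in> (\<Union>s\<in>{1..card A}. {S. S \<subseteq> A \<and> card S = s})"
    then show "S \<in> {S. S \<subseteq> A \<and> S \<noteq> {}}" by auto
  qed
  have "(\<Sum>S\<in>{S. S \<subseteq> A \<and> S \<noteq> {}}. \<phi> (card S))
      = (\<Sum>s\<in>{1..card A}. \<Sum>S\<in>{S. S \<subseteq> A \<and> card S = s}. \<phi> (card S))"
    unfolding eq
  proof (rule sum.UNION_disjoint)
    show "\<forall>i\<in>{1..card A}. finite {S. S \<subseteq> A \<and> card S = i}"
      using assms by (auto intro: finite_subset[of _ "Pow A"])
  qed auto
  also have "\<dots> = (\<Sum>s\<in>{1..card A}. (card A choose s) * \<phi> s)"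
  proof (rule sum.cong[OF refl])
    fix s
    have "(\<Sum>S\<in>{S. S \<subseteq> A \<and> card S = s}. \<phi> (card S)) = (\<Sum>S\<in>{S. S \<subseteq> A \<and> card S = s}. \<phi> s)"
      by (rule sum.cong) auto
    also have "\<dots> = (card A choose s) * \<phi> s" using n_subsets[OF assms, of s] by simp
    finally show "(\<Sum>S\<in>{S. S \<subseteq> A \<and> card S = s}. \<phi> (card S)) = (card A choose s) * \<phi> s" .
  qed
  finally show ?thesis .
qed

lemma card_fibers:
  assumes "finite B" "\<forall>a\<in>A. card {b\<in>B. \<gamma> b = a} = x" "S \<subseteq> A" "finite S"
  shows "card {b\<in>B. \<gamma> b \<in> S} = x * card S"
proof -
  have "{b\<in>B. \<gamma> b \<in> S} = (\<Union>a\<in>S. {b\<in>B. \<gamma> b = a})" by auto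
  moreover have "card (\<Union>a\<in>S. {b\<in>B. \<gamma> b = a}) = (\<Sum>a\<in>S. card {b\<in>B. \<gamma> b = a})"
    using assms by (intro card_UN_disjoint) auto
  ultimately have "card {b\<in>B. \<gamma> b \<in> S} = (\<Sum>a\<in>S. card {b\<in>B. \<gamma> b = a})" by simp
  also have "\<dots> = (\<Sum>a\<in>S. x)" using assms by (intro sum.cong) auto
  finally show ?thesis by simp
qed

lemma cfree_split_bij:
  assumes BC: "B \<inter> C = {}" and g: "\<gamma> ` B \<subseteq> A" and SA: "S \<subseteq> A"
  shows "bij_betw (\<lambda>f. (restrict f S, restrict f (A - S)))
     {f \<in> cfree A B C \<gamma>. {a\<in>A. f a \<in> C} = S}
     ((\<Pi>\<^sub>E a\<in>S. C) \<times> cfree (A - S) {b\<in>B. \<gamma> b \<notin> S} {b\<in>B. \<gamma> b \<in> S} \<gamma>)"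
proof (rule bij_betw_byWitness[where f' = "\<lambda>(u,v). (\<lambda>a. if a \<in> S then u a else v a)"])
  show "\<forall>f\<in>{f \<in> cfree A B C \<gamma>. {a\<in>A. f a \<in> C} = S}.
      (\<lambda>(u,v). (\<lambda>a. if a \<in> S then u a else v a)) (restrict f S, restrict f (A - S)) = f"
  proof
    fix f assume "f \<in> {f \<in> cfree A B C \<gamma>. {a\<in>A. f a \<in> C} = S}"
    then have "f \<in> A \<rightarrow>\<^sub>E (B \<union> C)" by (simp add: cfree_def)
    then show "(\<lambda>(u,v). (\<lambda>a. if a \<in> S then u a else v a)) (restrict f S, restrict f (A - S)) = f"
      using SA by (auto simp: fun_eq_iff PiE_def extensional_def)
  qed
  show "\<forall>uv\<in>(\<Pi>\<^sub>E a\<in>S. C) \<times> cfree (A - S) {b\<in>B. \<gamma> b \<notin> S} {b\<in>B. \<gamma> b \<in> S} \<gamma>.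
      (\<lambda>f. (restrict f S, restrict f (A - S))) ((\<lambda>(u,v). (\<lambda>a. if a \<in> S then u a else v a)) uv) = uv"
  proof
    fix uv assume "uv \<in> (\<Pi>\<^sub>E a\<in>S. C) \<times> cfree (A - S) {b\<in>B. \<gamma> b \<notin> S} {b\<in>B. \<gamma> b \<in> S} \<gamma>"
    then obtain u v where uv: "uv = (u,v)" "u \<in> (\<Pi>\<^sub>E a\<in>S. C)"
      "v \<in> (A - S) \<rightarrow>\<^sub>E ({b\<in>B. \<gamma> b \<notin> S} \<union> {b\<in>B. \<gamma> b \<in> S})"
      by (auto simp: cfree_def)
    then show "(\<lambda>f. (restrict f S, restrict f (A - S))) ((\<lambda>(u,v). (\<lambda>a. if a \<in> S then u a else v a)) uv) = uv"
      by (auto simp: fun_eq_iff PiE_def extensional_def)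
  qed
  show "(\<lambda>f. (restrict f S, restrict f (A - S))) ` {f \<in> cfree A B C \<gamma>. {a\<in>A. f a \<in> C} = S}
      \<subseteq> (\<Pi>\<^sub>E a\<in>S. C) \<times> cfree (A - S) {b\<in>B. \<gamma> b \<notin> S} {b\<in>B. \<gamma> b \<in> S} \<gamma>"
  proof (rule image_subsetI)
    fix f assume "f \<in> {f \<in> cfree A B C \<gamma>. {a\<in>A. f a \<in> C} = S}"
    then have f: "f \<in> cfree A B C \<gamma>" and S: "S = {a\<in>A. f a \<in> C}" by auto
    have fP: "f \<in> A \<rightarrow>\<^sub>E (B \<union> C)" using f by (simp add: cfree_def)
    have r1: "restrict f S \<in> (\<Pi>\<^sub>E a\<in>S. C)" using S by auto
    have "restrict f (A - S) \<in> (A - S) \<rightarrow>\<^sub>E ({b\<in>B. \<gamma> b \<notin> S} \<union> {b\<in>B. \<gamma> b \<in> S})"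
      using fP S by auto
    moreover have "\<forall>b\<in>{b\<in>B. \<gamma> b \<notin> S}. \<exists>t. (stp (restrict f (A - S)) \<gamma> {b\<in>B. \<gamma> b \<notin> S} ^^ t) b \<in> {b\<in>B. \<gamma> b \<in> S}"
    proof
      fix b assume b: "b \<in> {b\<in>B. \<gamma> b \<notin> S}"
      then obtain t where "(stp f \<gamma> B ^^ t) b \<in> C" using f by (auto simp: cfree_def)
      from reach_restrict1[OF fP S g BC, of "restrict f (A - S)"] this b
      show "\<exists>t. (stp (restrict f (A - S)) \<gamma> {b\<in>B. \<gamma> b \<notin> S} ^^ t) b \<in> {b\<in>B. \<gamma> b \<in> S}"
        by auto
    qed
    ultimately have "restrict f (A - S) \<in> cfree (A - S) {b\<in>B. \<gamma> b \<notin> S} {b\<in>B. \<gamma> b \<in> S} \<gamma>"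
      by (simp add: cfree_def)
    with r1 show "(restrict f S, restrict f (A - S)) \<in> (\<Pi>\<^sub>E a\<in>S. C) \<times> cfree (A - S) {b\<in>B. \<gamma> b \<notin> S} {b\<in>B. \<gamma> b \<in> S} \<gamma>"
      by simp
  qed
  show "(\<lambda>(u,v). (\<lambda>a. if a \<in> S then u a else v a)) `
      ((\<Pi>\<^sub>E a\<in>S. C) \<times> cfree (A - S) {b\<in>B. \<gamma> b \<notin> S} {b\<in>B. \<gamma> b \<in> S} \<gamma>)
      \<subseteq> {f \<in> cfree A B C \<gamma>. {a\<in>A. f a \<in> C} = S}"
  proof (rule image_subsetI)
    fix uv assume "uv \<in> (\<Pi>\<^sub>E a\<in>S. C) \<times> cfree (A - S) {b\<in>B. \<gamma> b \<notin> S} {b\<in>B. \<gamma> b \<in> S} \<gamma>"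
    then obtain u v where uv: "uv = (u, v)" and u: "u \<in> (\<Pi>\<^sub>E a\<in>S. C)" and v: "v \<in> cfree (A - S) {b\<in>B. \<gamma> b \<notin> S} {b\<in>B. \<gamma> b \<in> S} \<gamma>" by auto
    define f where "f = (\<lambda>a. if a \<in> S then u a else v a)"
    have vP: "v \<in> (A - S) \<rightarrow>\<^sub>E ({b\<in>B. \<gamma> b \<notin> S} \<union> {b\<in>B. \<gamma> b \<in> S})"
      using v by (simp add: cfree_def)
    have fP: "f \<in> A \<rightarrow>\<^sub>E (B \<union> C)"
      using u vP SA unfolding f_def by (auto simp: PiE_def Pi_def extensional_def)
    have fS: "\<And>a. a \<in> S \<Longrightarrow> f a \<in> C" using u by (auto simp: f_def)
    have vB: "\<And>a. a \<in> A - S \<Longrightarrow> v a \<in> B" using vP by auto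
    have veq: "\<And>a. a \<in> A - S \<Longrightarrow> v a = f a" by (auto simp: f_def)
    have "\<forall>b\<in>B. \<exists>t. (stp f \<gamma> B ^^ t) b \<in> C"
    proof
      fix b assume b: "b \<in> B"
      have "\<exists>t. (stp v \<gamma> {b\<in>B. \<gamma> b \<notin> S} ^^ t) b \<in> {b\<in>B. \<gamma> b \<in> S}"
      proof (cases "\<gamma> b \<in> S")
        case True then show ?thesis using b by (intro exI[of _ 0]) auto
      next
        case False then show ?thesis using v b by (auto simp: cfree_def)
      qed
      then obtain t where "(stp v \<gamma> {b\<in>B. \<gamma> b \<notin> S} ^^ t) b \<in> {b\<in>B. \<gamma> b \<in> S}" by blast
      from reach_restrict2[OF fS SA g BC vB veq b this]
      show "\<exists>t. (stp f \<gamma> B ^^ t) b \<in> C" .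
    qed
    then have "f \<in> cfree A B C \<gamma>" using fP by (simp add: cfree_def)
    moreover have "{a\<in>A. f a \<in> C} = S"
    proof (intro set_eqI iffI)
      fix a assume a: "a \<in> {a\<in>A. f a \<in> C}"
      show "a \<in> S"
      proof (rule ccontr)
        assume "a \<notin> S"
        then have "f a \<in> B" using vB[of a] veq[of a] a by auto
        then show False using a BC by auto
      qed
    qed (use fS SA in auto)
    ultimately show "(\<lambda>(u,v). (\<lambda>a. if a \<in> S then u a else v a)) uv \<in> {f \<in> cfree A B C \<gamma>. {a\<in>A. f a \<in> C} = S}"
      by (simp add: f_def uv)
  qed
qed

theorem cfree_card:
  assumes "finite A" "finite B" "finite C" "B \<inter> C = {}" "\<gamma> ` B \<subseteq> A"
    "\<forall>a\<in>A. card {b\<in>B. \<gamma> b = a} = x"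
  shows "card (cfree A B C \<gamma>) = (if A = {} then 1 else card C * (card C + x * card A)^(card A - 1))"
  using assms
proof (induction "card A" arbitrary: A B C rule: less_induct)
  case less
  show ?case
  proof (cases "A = {}")
    case True
    then have "B = {}" using less.prems by auto
    then have "cfree A B C \<gamma> = {\<lambda>_. undefined}" using True by (auto simp: cfree_def)
    then show ?thesis using True by simp
  next
    case False
    obtain p where np: "card A = Suc p" using False less.prems(1)
      by (cases "card A") auto
    define Fs where "Fs S = {f \<in> cfree A B C \<gamma>. {a\<in>A. f a \<in> C} = S}" for S
    have fincf: "finite (cfree A B C \<gamma>)"
    proof (rule finite_subset)
      show "cfree A B C \<gamma> \<subseteq> A \<rightarrow>\<^sub>E (B \<union> C)" by (auto simp: cfree_def)
      show "finite (A \<rightarrow>\<^sub>E (B \<union> C))" using less.prems by (intro finite_PiE) auto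
    qed
    have cov: "cfree A B C \<gamma> = (\<Union>S\<in>{S. S \<subseteq> A \<and> S \<noteq> {}}. Fs S)"
    proof (intro equalityI subsetI)
      fix f assume f: "f \<in> cfree A B C \<gamma>"
      have fP: "f \<in> A \<rightarrow>\<^sub>E (B \<union> C)" using f by (simp add: cfree_def)
      obtain a0 where a0: "a0 \<in> A" using False by auto
      have "\<exists>a\<in>A. f a \<in> C"
      proof (cases "f a0 \<in> C")
        case True then show ?thesis using a0 by auto
      next
        case False
        then have b: "f a0 \<in> B" using fP a0 by auto
        then obtain t where "(stp f \<gamma> B ^^ t) (f a0) \<in> C" using f by (auto simp: cfree_def)
        from reach_some_root[OF fP less.prems(4,5) b this] show ?thesis .
      qed
      then have "{a\<in>A. f a \<in> C} \<noteq> {}" by auto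
      then show "f \<in> (\<Union>S\<in>{S. S \<subseteq> A \<and> S \<noteq> {}}. Fs S)"
        using f by (auto simp: Fs_def)
    qed (auto simp: Fs_def)
    have card_Fs: "card (Fs S) = card C ^ card S *
        (if card S = card A then 1 else x * card S * (x * card A)^(card A - card S - 1))"
      if S: "S \<subseteq> A" "S \<noteq> {}" for S
    proof -
      let ?B' = "{b\<in>B. \<gamma> b \<notin> S}" and ?C' = "{b\<in>B. \<gamma> b \<in> S}"
      have finS: "finite S" using S less.prems(1) finite_subset by blast
      have c0: "card (Fs S) = card ((\<Pi>\<^sub>E a\<in>S. C) \<times> cfree (A - S) ?B' ?C' \<gamma>)"
        unfolding Fs_def using cfree_split_bij[OF less.prems(4,5) S(1)] by (rule bij_betw_same_card)
      have c1: "card ((\<Pi>\<^sub>E a\<in>S. C) \<times> cfree (A - S) ?B' ?C' \<gamma>) = card C ^ card S * card (cfree (A - S) ?B' ?C' \<gamma>)"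
        using finS by (simp add: card_cartesian_product card_PiE)
      have c2: "card (cfree (A - S) ?B' ?C' \<gamma>) =
          (if A - S = {} then 1 else card ?C' * (card ?C' + x * card (A - S))^(card (A - S) - 1))"
      proof (rule less.hyps)
        have "card (A - S) = card A - card S" using finS S(1) by (simp add: card_Diff_subset)
        moreover have "card S > 0" using finS S(2) by auto
        moreover have "card S \<le> card A" using card_mono[OF less.prems(1) S(1)] .
        ultimately show "card (A - S) < card A" by linarith
        show "\<forall>a\<in>A - S. card {b \<in> ?B'. \<gamma> b = a} = x"
        proof
          fix a assume a: "a \<in> A - S"
          then have "{b \<in> ?B'. \<gamma> b = a} = {b\<in>B. \<gamma> b = a}" by auto
          then show "card {b \<in> ?B'. \<gamma> b = a} = x" using a less.prems(6) by auto
        qed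
      qed (use less.prems in auto)
      have c3: "card ?C' = x * card S" using card_fibers[OF less.prems(2,6) S(1) finS] .
      have c4: "card (A - S) = card A - card S" using finS S by (simp add: card_Diff_subset)
      have c5: "(A - S = {}) = (card S = card A)"
        using S less.prems(1) card_subset_eq[of A S] by auto
      have c6: "x * card S + x * (card A - card S) = x * card A"
        using card_mono[OF less.prems(1) S(1)] by (simp add: algebra_simps)
      show ?thesis unfolding c0 c1 c2 c3 c4 c5 c6 by simp
    qed
    have "card (cfree A B C \<gamma>) = (\<Sum>S\<in>{S. S \<subseteq> A \<and> S \<noteq> {}}. card (Fs S))"
      unfolding cov
    proof (rule card_UN_disjoint)
      show "finite {S. S \<subseteq> A \<and> S \<noteq> {}}" using less.prems(1)
        by (auto intro: finite_subset[of _ "Pow A"])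
      show "\<forall>S\<in>{S. S \<subseteq> A \<and> S \<noteq> {}}. finite (Fs S)"
        using fincf by (auto simp: Fs_def)
    qed (auto simp: Fs_def)
    also have "\<dots> = (\<Sum>S\<in>{S. S \<subseteq> A \<and> S \<noteq> {}}. (\<lambda>s. card C ^ s *
        (if s = card A then 1 else x * s * (x * card A)^(card A - s - 1))) (card S))"
      by (rule sum.cong) (auto simp: card_Fs)
    also have "\<dots> = (\<Sum>s\<in>{1..card A}. (card A choose s) * (card C ^ s *
        (if s = card A then 1 else x * s * (x * card A)^(card A - s - 1))))"
      by (rule sum_subsets_card[OF less.prems(1)])
    also have "\<dots> = card C * (card C + x * card A) ^ p"
      unfolding np using cf_alg[of p "card C" x] by (simp add: algebra_simps)
    finally show ?thesis using False np by simp
  qed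
qed


definition img :: "('a \<Rightarrow> 'b) \<Rightarrow> 'a set set \<Rightarrow> 'b set set" where
  "img \<sigma> G = (\<lambda>L. \<sigma> ` L) ` G"

lemma img_comp: "img (\<sigma> \<circ> \<tau>) G = img \<sigma> (img \<tau> G)"
  by (auto simp: img_def image_comp)

lemma img_id: "img id G = G"
  by (auto simp: img_def)

lemma img_cong: "(\<And>x. x \<in> \<Union>G \<Longrightarrow> \<sigma> x = \<tau> x) \<Longrightarrow> img \<sigma> G = img \<tau> G"
proof -
  assume a: "\<And>x. x \<in> \<Union>G \<Longrightarrow> \<sigma> x = \<tau> x"
  have "\<And>L. L \<in> G \<Longrightarrow> \<sigma> ` L = \<tau> ` L"
  proof -
    fix L assume "L \<in> G"
    then show "\<sigma> ` L = \<tau> ` L" by (intro image_cong[OF refl]) (use a in blast)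
  qed
  then show ?thesis unfolding img_def by (auto intro: image_cong)
qed

lemma card_img:
  assumes "inj_on \<sigma> (\<Union>G)"
  shows "card (img \<sigma> G) = card G"
proof -
  have "inj_on (\<lambda>L. \<sigma> ` L) G"
  proof (rule inj_onI)
    fix L1 L2 assume "L1 \<in> G" "L2 \<in> G" "\<sigma> ` L1 = \<sigma> ` L2"
    then show "L1 = L2" using assms inj_on_image_eq_iff[of \<sigma> "\<Union>G" L1 L2] by auto
  qed
  then show ?thesis by (simp add: img_def card_image)
qed

context
  fixes k m :: nat and H :: "nat set set"
  assumes Hk: "rgraph m {1..k} H"
begin

definition "Orb = {G. H_graph_on k H {1..k} G}"
definition "Sk = {\<sigma>. \<sigma> permutes {1..k}}"

lemma H_sub: "L \<in> H \<Longrightarrow> L \<subseteq> {1..k} \<and> card L = m"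
  using Hk by (auto simp: rgraph_def)

lemma Orb_perm: "G \<in> Orb \<longleftrightarrow> (\<exists>\<sigma>\<in>Sk. G = img \<sigma> H)"
proof
  assume "G \<in> Orb"
  then obtain \<sigma> where s: "bij_betw \<sigma> {1..k} {1..k}" "G = img \<sigma> H"
    by (auto simp: Orb_def H_graph_on_def img_def)
  define \<sigma>' where "\<sigma>' x = (if x \<in> {1..k} then \<sigma> x else x)" for x
  have "bij_betw \<sigma>' {1..k} {1..k}"
    using s(1) by (rule bij_betw_cong[THEN iffD1, rotated]) (simp add: \<sigma>'_def)
  then have "\<sigma>' permutes {1..k}" by (rule bij_imp_permutes) (auto simp: \<sigma>'_def)
  then have "\<sigma>' \<in> Sk" by (simp add: Sk_def)
  moreover have "img \<sigma>' H = img \<sigma> H"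
  proof (rule img_cong)
    fix x assume "x \<in> \<Union>H"
    then have "x \<in> {1..k}" using H_sub by blast
    then show "\<sigma>' x = \<sigma> x" by (simp add: \<sigma>'_def)
  qed
  ultimately show "\<exists>\<sigma>\<in>Sk. G = img \<sigma> H" using s by auto
next
  assume "\<exists>\<sigma>\<in>Sk. G = img \<sigma> H"
  then obtain \<sigma> where "\<sigma> permutes {1..k}" "G = img \<sigma> H" by (auto simp: Sk_def)
  then show "G \<in> Orb"
    by (auto simp: Orb_def H_graph_on_def img_def intro!: exI[of _ \<sigma>] permutes_imp_bij)
qed

lemma Sk_card: "card Sk = fact k"
  unfolding Sk_def by (rule card_permutations) auto

lemma Sk_finite: "finite Sk"
  unfolding Sk_def by (rule finite_permutations) auto

lemma Aut_eq: "Aut k H = {\<sigma>\<in>Sk. img \<sigma> H = H}"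
  by (auto simp: Aut_def Sk_def img_def)

lemma fiber_card:
  assumes "\<sigma>0 \<in> Sk"
  shows "card {\<sigma>\<in>Sk. img \<sigma> H = img \<sigma>0 H} = card (Aut k H)"
proof -
  have p0: "\<sigma>0 permutes {1..k}" using assms by (simp add: Sk_def)
  have "bij_betw (\<lambda>\<tau>. \<sigma>0 \<circ> \<tau>) (Aut k H) {\<sigma>\<in>Sk. img \<sigma> H = img \<sigma>0 H}"
  proof (rule bij_betw_byWitness[where f' = "\<lambda>\<sigma>. inv \<sigma>0 \<circ> \<sigma>"])
    show "\<forall>a\<in>Aut k H. inv \<sigma>0 \<circ> (\<sigma>0 \<circ> a) = a"
      by (simp only: o_assoc permutes_inv_o(2)[OF p0] id_o) simp
    show "\<forall>a'\<in>{\<sigma>\<in>Sk. img \<sigma> H = img \<sigma>0 H}. \<sigma>0 \<circ> (inv \<sigma>0 \<circ> a') = a'"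
      by (simp only: o_assoc permutes_inv_o(1)[OF p0] id_o) simp
    show "(\<lambda>\<tau>. \<sigma>0 \<circ> \<tau>) ` Aut k H \<subseteq> {\<sigma>\<in>Sk. img \<sigma> H = img \<sigma>0 H}"
      using p0 by (auto simp: Aut_eq Sk_def img_comp intro: permutes_compose)
    show "(\<lambda>\<sigma>. inv \<sigma>0 \<circ> \<sigma>) ` {\<sigma>\<in>Sk. img \<sigma> H = img \<sigma>0 H} \<subseteq> Aut k H"
    proof (rule image_subsetI)
      fix \<sigma> assume s: "\<sigma> \<in> {\<sigma>\<in>Sk. img \<sigma> H = img \<sigma>0 H}"
      have "img (inv \<sigma>0 \<circ> \<sigma>) H = img (inv \<sigma>0 \<circ> \<sigma>0) H"
        using s by (simp add: img_comp)
      also have "\<dots> = H" using permutes_inv_o(2)[OF p0] by (simp add: img_id)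
      finally show "inv \<sigma>0 \<circ> \<sigma> \<in> Aut k H"
        using s p0 by (auto simp: Aut_eq Sk_def intro: permutes_compose permutes_inv)
    qed
  qed
  then show ?thesis by (simp add: bij_betw_same_card)
qed

lemma Orb_finite: "finite Orb"
proof -
  have "Orb = (\<lambda>\<sigma>. img \<sigma> H) ` Sk" using Orb_perm by auto
  then show ?thesis using Sk_finite by simp
qed

lemma Orb_Aut: "card Orb * card (Aut k H) = fact k"
proof -
  have "Sk = (\<Union>G\<in>Orb. {\<sigma>\<in>Sk. img \<sigma> H = G})" using Orb_perm by auto
  moreover have "card (\<Union>G\<in>Orb. {\<sigma>\<in>Sk. img \<sigma> H = G}) = (\<Sum>G\<in>Orb. card {\<sigma>\<in>Sk. img \<sigma> H = G})"
    using Orb_finite Sk_finite by (intro card_UN_disjoint) auto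
  ultimately have "card Sk = (\<Sum>G\<in>Orb. card {\<sigma>\<in>Sk. img \<sigma> H = G})" by simp
  also have "\<dots> = (\<Sum>G\<in>Orb. card (Aut k H))"
  proof (rule sum.cong[OF refl])
    fix G assume "G \<in> Orb"
    then obtain \<sigma>0 where "\<sigma>0 \<in> Sk" "G = img \<sigma>0 H" using Orb_perm by auto
    then show "card {\<sigma>\<in>Sk. img \<sigma> H = G} = card (Aut k H)" using fiber_card by auto
  qed
  finally show ?thesis using Sk_card by simp
qed

lemma H_finite: "finite H"
proof (rule finite_subset[of _ "Pow {1..k}"])
  show "H \<subseteq> Pow {1..k}" using H_sub by auto
qed simp

lemma Orb_fin: "G \<in> Orb \<Longrightarrow> finite G"
  using Orb_perm H_finite by (auto simp: img_def)

lemma Orb_elem: "G \<in> Orb \<Longrightarrow> card G = card H \<and> (\<forall>L\<in>G. L \<subseteq> {1..k} \<and> card L = m)"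
proof -
  assume "G \<in> Orb"
  then obtain \<sigma> where s: "\<sigma> permutes {1..k}" "G = img \<sigma> H" using Orb_perm Sk_def by auto
  have inj: "inj \<sigma>" using s(1) by (rule permutes_inj)
  have "card G = card H" using s card_img[of \<sigma> H] inj by (auto intro: inj_on_subset)
  moreover have "\<forall>L\<in>G. L \<subseteq> {1..k} \<and> card L = m"
  proof
    fix L assume "L \<in> G"
    then obtain L0 where L0: "L0 \<in> H" "L = \<sigma> ` L0" using s by (auto simp: img_def)
    have "\<sigma> ` L0 \<subseteq> \<sigma> ` {1..k}" using H_sub L0 by (intro image_mono) auto
    then have "L \<subseteq> {1..k}" using L0 permutes_image[OF s(1)] by auto
    moreover have "card L = m" using L0 H_sub card_image[of \<sigma> L0] inj by (auto intro: inj_on_subset)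
    ultimately show "L \<subseteq> {1..k} \<and> card L = m" by simp
  qed
  ultimately show ?thesis by simp
qed

lemma exists_perm_to:
  assumes "L \<subseteq> {1..k}" "card L = m"
  shows "\<exists>\<tau>\<in>Sk. \<tau> ` {1..m} = L"
proof -
  have mk: "m \<le> k" using assms card_mono[of "{1..k}" L] by auto
  obtain h1 where h1: "bij_betw h1 {1..m} L"
    using assms by (metis card_atLeastAtMost diff_Suc_1 finite_atLeastAtMost finite_same_card_bij finite_subset)
  have c2: "card ({1..k} - {1..m}) = card ({1..k} - L)"
    using assms mk by (simp add: card_Diff_subset finite_subset)
  obtain h2 where h2: "bij_betw h2 ({1..k} - {1..m}) ({1..k} - L)"
    using c2 finite_same_card_bij by blast
  define \<tau> where "\<tau> x = (if x \<in> {1..m} then h1 x else if x \<in> {1..k} then h2 x else x)" for x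
  have b1: "bij_betw \<tau> {1..m} L"
    using h1 by (rule bij_betw_cong[THEN iffD1, rotated]) (simp add: \<tau>_def)
  have b2: "bij_betw \<tau> ({1..k} - {1..m}) ({1..k} - L)"
    using h2 by (rule bij_betw_cong[THEN iffD1, rotated]) (simp add: \<tau>_def)
  have "bij_betw \<tau> ({1..m} \<union> ({1..k} - {1..m})) (L \<union> ({1..k} - L))"
    by (rule bij_betw_combine[OF b1 b2]) auto
  moreover have "{1..m} \<union> ({1..k} - {1..m}) = {1..k}" using mk by auto
  moreover have "L \<union> ({1..k} - L) = {1..k}" using assms by auto
  ultimately have "bij_betw \<tau> {1..k} {1..k}" by simp
  then have "\<tau> permutes {1..k}" by (rule bij_imp_permutes) (use mk in \<open>auto simp: \<tau>_def\<close>)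
  then have "\<tau> \<in> Sk" by (simp add: Sk_def)
  moreover have "\<tau> ` {1..m} = L" using b1 by (simp add: bij_betw_def)
  ultimately show ?thesis by blast
qed

lemma R_H_eq: "R_H k m H = {G\<in>Orb. {1..m} \<in> G}"
  by (simp add: R_H_def Orb_def)

lemma count_containing:
  assumes "L \<subseteq> {1..k}" "card L = m"
  shows "card {G\<in>Orb. L \<in> G} = card (R_H k m H)"
proof -
  obtain \<tau> where t: "\<tau> \<in> Sk" "\<tau> ` {1..m} = L" using exists_perm_to[OF assms] by blast
  have p: "\<tau> permutes {1..k}" using t by (simp add: Sk_def)
  have orb: "img \<rho> G \<in> Orb" if G: "G \<in> Orb" and r: "\<rho> \<in> Sk" for G \<rho>
  proof -
    obtain \<sigma> where s: "\<sigma> \<in> Sk" "G = img \<sigma> H" using G Orb_perm by auto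
    have "img \<rho> G = img (\<rho> \<circ> \<sigma>) H" using s by (simp add: img_comp)
    moreover have "\<rho> \<circ> \<sigma> \<in> Sk" using s r by (auto simp: Sk_def intro: permutes_compose)
    ultimately show ?thesis using Orb_perm by blast
  qed
  have ti: "inv \<tau> \<in> Sk" using p by (simp add: Sk_def permutes_inv)
  have "bij_betw (img \<tau>) (R_H k m H) {G\<in>Orb. L \<in> G}"
  proof (rule bij_betw_byWitness[where f' = "img (inv \<tau>)"])
    show "\<forall>a\<in>R_H k m H. img (inv \<tau>) (img \<tau> a) = a"
    proof
      fix a
      have "img (inv \<tau>) (img \<tau> a) = img (inv \<tau> \<circ> \<tau>) a" by (simp only: img_comp)
      also have "\<dots> = a" by (simp only: permutes_inv_o(2)[OF p] img_id)
      finally show "img (inv \<tau>) (img \<tau> a) = a" .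
    qed
    show "\<forall>a'\<in>{G\<in>Orb. L \<in> G}. img \<tau> (img (inv \<tau>) a') = a'"
    proof
      fix a
      have "img \<tau> (img (inv \<tau>) a) = img (\<tau> \<circ> inv \<tau>) a" by (simp only: img_comp)
      also have "\<dots> = a" by (simp only: permutes_inv_o(1)[OF p] img_id)
      finally show "img \<tau> (img (inv \<tau>) a) = a" .
    qed
    show "img \<tau> ` R_H k m H \<subseteq> {G\<in>Orb. L \<in> G}"
    proof (rule image_subsetI)
      fix G assume "G \<in> R_H k m H"
      then have G: "G \<in> Orb" "{1..m} \<in> G" by (auto simp: R_H_eq)
      have "L \<in> img \<tau> G" using G(2) t(2) unfolding img_def by blast
      then show "img \<tau> G \<in> {G\<in>Orb. L \<in> G}" using orb[OF G(1) t(1)] by simp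
    qed
    show "img (inv \<tau>) ` {G\<in>Orb. L \<in> G} \<subseteq> R_H k m H"
    proof (rule image_subsetI)
      fix G assume G: "G \<in> {G\<in>Orb. L \<in> G}"
      have "inv \<tau> ` L = (inv \<tau> \<circ> \<tau>) ` {1..m}" by (simp add: t(2)[symmetric] image_comp)
      then have "inv \<tau> ` L = {1..m}" using permutes_inv_o(2)[OF p] by simp
      moreover have "inv \<tau> ` L \<in> img (inv \<tau>) G" using G unfolding img_def by blast
      ultimately have "{1..m} \<in> img (inv \<tau>) G" by simp
      then show "img (inv \<tau>) G \<in> R_H k m H" using G orb[OF _ ti] by (simp add: R_H_eq)
    qed
  qed
  then show ?thesis by (simp add: bij_betw_same_card)
qed

theorem R_H_card: "card (R_H k m H) * (k choose m) * card (Aut k H) = fact k * card H"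
proof -
  define M where "M = {L. L \<subseteq> {1..k} \<and> card L = m}"
  define P where "P = {(G, L). G \<in> Orb \<and> L \<in> G}"
  have finM: "finite M" unfolding M_def by (auto intro: finite_subset[of _ "Pow {1..k}"])
  have P1: "P = (SIGMA G:Orb. G)" by (auto simp: P_def)
  have "card P = (\<Sum>G\<in>Orb. card G)" unfolding P1
    using Orb_finite Orb_fin by (subst card_SigmaI) auto
  also have "\<dots> = (\<Sum>G\<in>Orb. card H)" using Orb_elem by (intro sum.cong) auto
  finally have cP1: "card P = card Orb * card H" by simp
  have "bij_betw (\<lambda>(G,L). (L,G)) P (SIGMA L:M. {G\<in>Orb. L \<in> G})"
    by (rule bij_betw_byWitness[where f'="\<lambda>(L,G). (G,L)"]) (use Orb_elem in \<open>auto simp: P_def M_def\<close>)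
  then have "card P = card (SIGMA L:M. {G\<in>Orb. L \<in> G})" by (rule bij_betw_same_card)
  also have "\<dots> = (\<Sum>L\<in>M. card {G\<in>Orb. L \<in> G})"
    using finM Orb_finite by (subst card_SigmaI) auto
  also have "\<dots> = (\<Sum>L\<in>M. card (R_H k m H))"
    by (intro sum.cong) (auto simp: M_def count_containing)
  also have "\<dots> = (k choose m) * card (R_H k m H)"
    using n_subsets[of "{1..k}" m] by (simp add: M_def)
  finally have "card Orb * card H = (k choose m) * card (R_H k m H)" using cP1 by simp
  then have e1: "card Orb * card H = (k choose m) * card (R_H k m H)" .
  have "fact k * card H = (card Orb * card (Aut k H)) * card H" using Orb_Aut by simp
  also have "\<dots> = (card Orb * card H) * card (Aut k H)" by (simp only: ac_simps)
  also have "\<dots> = card (R_H k m H) * (k choose m) * card (Aut k H)" unfolding e1 by (simp only: ac_simps)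
  finally show ?thesis by simp
qed

end

definition part :: "nat set \<Rightarrow> nat \<Rightarrow> nat set set set" where
  "part W d = {\<pi>. (\<forall>N\<in>\<pi>. N \<subseteq> W \<and> card N = d) \<and> \<Union>\<pi> = W \<and>
      (\<forall>N\<in>\<pi>. \<forall>N'\<in>\<pi>. N \<noteq> N' \<longrightarrow> N \<inter> N' = {})}"

lemma part_empty: "d \<ge> 1 \<Longrightarrow> part {} d = {{}}"
  by (auto simp: part_def)

lemma part_decomp:
  assumes d: "d \<ge> 1" and w0: "w0 \<in> W" and fin: "finite W"
  shows "part W d = (\<Union>S\<in>{S. S \<subseteq> W - {w0} \<and> card S = d - 1}.
            insert (insert w0 S) ` part (W - insert w0 S) d)"
proof (intro equalityI subsetI)
  fix \<pi> assume p: "\<pi> \<in> part W d"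
  then obtain N0 where N0: "N0 \<in> \<pi>" "w0 \<in> N0" using w0 by (auto simp: part_def)
  have N0W: "N0 \<subseteq> W" "card N0 = d" using p N0 by (auto simp: part_def)
  define S where "S = N0 - {w0}"
  have S: "S \<subseteq> W - {w0}" "card S = d - 1" using N0W N0 fin
    by (auto simp: S_def finite_subset)
  have iS: "insert w0 S = N0" using N0 by (auto simp: S_def)
  have hp1: "\<forall>N\<in>\<pi>. N \<subseteq> W \<and> card N = d" and hp2: "\<Union>\<pi> = W"
    and hp3: "\<forall>N\<in>\<pi>. \<forall>N'\<in>\<pi>. N \<noteq> N' \<longrightarrow> N \<inter> N' = {}" using p by (auto simp: part_def)
  have "\<pi> - {N0} \<in> part (W - N0) d"
    unfolding part_def
  proof (intro CollectI conjI)
    show b1: "\<forall>N\<in>\<pi> - {N0}. N \<subseteq> W - N0 \<and> card N = d"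
    proof
      fix N assume N: "N \<in> \<pi> - {N0}"
      then have "N \<inter> N0 = {}" using hp3 N0(1) by auto
      then show "N \<subseteq> W - N0 \<and> card N = d" using hp1 N by auto
    qed
    show "\<Union>(\<pi> - {N0}) = W - N0"
    proof
      show "\<Union>(\<pi> - {N0}) \<subseteq> W - N0" using b1 by auto
      show "W - N0 \<subseteq> \<Union>(\<pi> - {N0})"
      proof
        fix x assume "x \<in> W - N0"
        then obtain N where "N \<in> \<pi>" "x \<in> N" "x \<notin> N0" using hp2 by auto
        then show "x \<in> \<Union>(\<pi> - {N0})" by auto
      qed
    qed
    show "\<forall>N\<in>\<pi> - {N0}. \<forall>N'\<in>\<pi> - {N0}. N \<noteq> N' \<longrightarrow> N \<inter> N' = {}" using hp3 by auto
  qed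
  moreover have "\<pi> = insert N0 (\<pi> - {N0})" using N0 by auto
  ultimately show "\<pi> \<in> (\<Union>S\<in>{S. S \<subseteq> W - {w0} \<and> card S = d - 1}. insert (insert w0 S) ` part (W - insert w0 S) d)"
    using S iS by blast
next
  fix \<pi> assume "\<pi> \<in> (\<Union>S\<in>{S. S \<subseteq> W - {w0} \<and> card S = d - 1}. insert (insert w0 S) ` part (W - insert w0 S) d)"
  then obtain S \<pi>' where S: "S \<subseteq> W - {w0}" "card S = d - 1"
    and p': "\<pi>' \<in> part (W - insert w0 S) d" and pi: "\<pi> = insert (insert w0 S) \<pi>'" by auto
  have fS: "finite S" using S fin finite_subset by blast
  have "w0 \<notin> S" using S by auto
  then have cN: "card (insert w0 S) = d" using S fS d by simp
  show "\<pi> \<in> part W d"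
    unfolding part_def pi
  proof (intro CollectI conjI)
    show "\<forall>N\<in>insert (insert w0 S) \<pi>'. N \<subseteq> W \<and> card N = d"
      using p' S w0 cN by (auto simp: part_def)
    show "\<Union> (insert (insert w0 S) \<pi>') = W"
      using p' S w0 by (auto simp: part_def)
    show "\<forall>N\<in>insert (insert w0 S) \<pi>'. \<forall>N'\<in>insert (insert w0 S) \<pi>'. N \<noteq> N' \<longrightarrow> N \<inter> N' = {}"
    proof (intro ballI impI)
      fix N N' assume NN: "N \<in> insert (insert w0 S) \<pi>'" "N' \<in> insert (insert w0 S) \<pi>'" "N \<noteq> N'"
      have q1: "\<forall>N\<in>\<pi>'. N \<subseteq> W - insert w0 S" and
        q3: "\<forall>N\<in>\<pi>'. \<forall>N'\<in>\<pi>'. N \<noteq> N' \<longrightarrow> N \<inter> N' = {}" using p' by (auto simp: part_def)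
      show "N \<inter> N' = {}"
      proof (cases "N = insert w0 S")
        case True
        then have "N' \<in> \<pi>'" using NN by auto
        then show ?thesis using q1 True by auto
      next
        case False
        then have N: "N \<in> \<pi>'" using NN by auto
        show ?thesis
        proof (cases "N' = insert w0 S")
          case True then show ?thesis using q1 N by auto
        next
          case False then show ?thesis using q3 N NN by auto
        qed
      qed
    qed
  qed
qed

theorem part_card:
  assumes d: "d \<ge> 1"
  shows "finite W \<Longrightarrow> card W = e * d \<Longrightarrow> card (part W d) = (\<Prod>j\<in>{1..e}. (j * d - 1) choose (d - 1))"
proof (induction e arbitrary: W)
  case 0
  then have "W = {}" by simp
  then show ?case using part_empty[OF d] by simp
next
  case (Suc e)
  have "card W > 0" using Suc.prems(2) d by simp
  then have "W \<noteq> {}" by auto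
  then obtain w0 where w0: "w0 \<in> W" by auto
  let ?SS = "{S. S \<subseteq> W - {w0} \<and> card S = d - 1}"
  have finSS: "finite ?SS"
  proof (rule finite_subset[of _ "Pow W"])
    show "?SS \<subseteq> Pow W" by auto
  qed (use Suc.prems in simp)
  have "card (part W d) = card (\<Union>S\<in>?SS. insert (insert w0 S) ` part (W - insert w0 S) d)"
    using part_decomp[OF d w0 Suc.prems(1)] by simp
  also have "\<dots> = (\<Sum>S\<in>?SS. card (insert (insert w0 S) ` part (W - insert w0 S) d))"
  proof (rule card_UN_disjoint[OF finSS])
    show "\<forall>S\<in>?SS. finite (insert (insert w0 S) ` part (W - insert w0 S) d)"
    proof
      fix S assume "S \<in> ?SS"
      have "part (W - insert w0 S) d \<subseteq> Pow (Pow W)" by (auto simp: part_def)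
      moreover have "finite (Pow (Pow W))" using Suc.prems(1) by simp
      ultimately have "finite (part (W - insert w0 S) d)" by (rule finite_subset)
      then show "finite (insert (insert w0 S) ` part (W - insert w0 S) d)" by simp
    qed
    show "\<forall>S\<in>?SS. \<forall>S'\<in>?SS. S \<noteq> S' \<longrightarrow>
      insert (insert w0 S) ` part (W - insert w0 S) d \<inter> insert (insert w0 S') ` part (W - insert w0 S') d = {}"
    proof (intro ballI impI)
      fix S S' assume SS: "S \<in> ?SS" "S' \<in> ?SS" "S \<noteq> S'"
      show "insert (insert w0 S) ` part (W - insert w0 S) d \<inter> insert (insert w0 S') ` part (W - insert w0 S') d = {}"
      proof (rule ccontr)
        assume "\<not> ?thesis"
        then obtain p1 p2 where p: "p1 \<in> part (W - insert w0 S) d" "p2 \<in> part (W - insert w0 S') d"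
          "insert (insert w0 S) p1 = insert (insert w0 S') p2" by auto
        have ne: "insert w0 S \<noteq> insert w0 S'" using SS by auto
        have "insert w0 S \<in> insert (insert w0 S') p2" using p(3) by blast
        then have "insert w0 S \<in> p2" using ne by blast
        then have "insert w0 S \<subseteq> W - insert w0 S'" using p(2) by (auto simp: part_def)
        then show False by auto
      qed
    qed
  qed
  also have "\<dots> = (\<Sum>S\<in>?SS. \<Prod>j\<in>{1..e}. (j * d - 1) choose (d - 1))"
  proof (rule sum.cong[OF refl])
    fix S assume S: "S \<in> ?SS"
    have fS: "finite S" using S Suc.prems(1) finite_subset by blast
    have inj: "inj_on (insert (insert w0 S)) (part (W - insert w0 S) d)"
    proof (rule inj_onI)
      fix p1 p2 assume p: "p1 \<in> part (W - insert w0 S) d" "p2 \<in> part (W - insert w0 S) d"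
        "insert (insert w0 S) p1 = insert (insert w0 S) p2"
      have n1: "insert w0 S \<notin> p1" "insert w0 S \<notin> p2" using p(1,2) by (auto simp: part_def)
      show "p1 = p2" using p(3) insert_ident[OF n1] by simp
    qed
    have "card (W - insert w0 S) = e * d"
    proof -
      have "w0 \<notin> S" using S by auto
      then have s1: "insert w0 S \<subseteq> W" "card (insert w0 S) = d" using S w0 fS d by auto
      have "finite (insert w0 S)" using fS by simp
      then have "card (W - insert w0 S) = card W - card (insert w0 S)" using s1(1) by (rule card_Diff_subset)
      then show ?thesis using s1(2) Suc.prems(2) by simp
    qed
    then have "card (part (W - insert w0 S) d) = (\<Prod>j\<in>{1..e}. (j * d - 1) choose (d - 1))"
      using Suc.IH Suc.prems(1) by simp
    then show "card (insert (insert w0 S) ` part (W - insert w0 S) d) = (\<Prod>j\<in>{1..e}. (j * d - 1) choose (d - 1))"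
      using inj by (simp add: card_image)
  qed
  also have "\<dots> = card ?SS * (\<Prod>j\<in>{1..e}. (j * d - 1) choose (d - 1))" by simp
  also have "card ?SS = (Suc e * d - 1) choose (d - 1)"
  proof -
    have "card ?SS = card (W - {w0}) choose (d - 1)" using n_subsets[of "W - {w0}" "d - 1"] Suc.prems by simp
    also have "card (W - {w0}) = Suc e * d - 1" using Suc.prems w0 by simp
    finally show ?thesis .
  qed
  finally show ?case by (simp add: mult.commute)
qed

lemma prod_rev_X:
  "(\<Prod>i=1..e. ((dd * (e - i + 1) - 1) choose (dd - 1))) = (\<Prod>j\<in>{1..e}. (j * dd - 1) choose (dd - 1))"
proof -
  have "(\<Prod>i=1..e. ((dd * (e - i + 1) - 1) choose (dd - 1))) =
      (\<Prod>i=1..e. ((dd * (e - (e + 1 - i) + 1) - 1) choose (dd - 1)))"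
    by (subst prod.atLeastAtMost_rev) simp
  also have "\<dots> = (\<Prod>j\<in>{1..e}. (j * dd - 1) choose (dd - 1))"
    by (rule prod.cong) (auto simp: mult.commute)
  finally show ?thesis .
qed


definition kap :: "nat \<Rightarrow> nat set \<Rightarrow> nat set \<Rightarrow> nat \<Rightarrow> nat" where
  "kap m P N j = (if j \<le> m then sorted_list_of_set P ! (j - 1) else sorted_list_of_set N ! (j - m - 1))"

lemma bij_shift: "bij_betw (\<lambda>j. j - Suc a) {Suc a..a + b} {..<b}"
  by (rule bij_betw_byWitness[where f'="\<lambda>i. i + Suc a"]) auto

lemma kap_bij:
  assumes "finite P" "finite N" "card P = m" "card N = d" "P \<inter> N = {}"
  shows "bij_betw (kap m P N) {1..m+d} (P \<union> N)" "kap m P N ` {1..m} = P"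
proof -
  let ?xs = "sorted_list_of_set P" and ?ys = "sorted_list_of_set N"
  have bx: "bij_betw ((!) ?xs) {..<m} P"
    by (rule bij_betw_nth) (use assms in auto)
  have by': "bij_betw ((!) ?ys) {..<d} N"
    by (rule bij_betw_nth) (use assms in auto)
  have s1: "bij_betw (\<lambda>j. j - Suc 0) {Suc 0..0 + m} {..<m}" by (rule bij_shift)
  have s2: "bij_betw (\<lambda>j. j - Suc m) {Suc m..m + d} {..<d}" by (rule bij_shift)
  have b1: "bij_betw (kap m P N) {1..m} P"
  proof -
    have "bij_betw ((!) ?xs \<circ> (\<lambda>j. j - Suc 0)) {1..m} P"
      using bij_betw_trans[OF s1 bx] by simp
    then show ?thesis by (rule bij_betw_cong[THEN iffD1, rotated]) (auto simp: kap_def)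
  qed
  have b2: "bij_betw (kap m P N) {Suc m..m+d} N"
  proof -
    have "bij_betw ((!) ?ys \<circ> (\<lambda>j. j - Suc m)) {Suc m..m+d} N"
      using bij_betw_trans[OF s2 by'] by simp
    then show ?thesis by (rule bij_betw_cong[THEN iffD1, rotated]) (auto simp: kap_def)
  qed
  have "bij_betw (kap m P N) ({1..m} \<union> {Suc m..m+d}) (P \<union> N)"
    by (rule bij_betw_combine[OF b1 b2 assms(5)])
  moreover have "{1..m} \<union> {Suc m..m+d} = {1..m+d}" by auto
  ultimately show "bij_betw (kap m P N) {1..m+d} (P \<union> N)" by simp
  show "kap m P N ` {1..m} = P" using b1 by (simp add: bij_betw_def)
qed

locale ST =
  fixes k m :: nat and H :: "nat set set" and e :: nat
  assumes mk: "m \<le> k - 1" and k1: "1 \<le> k" and e1: "1 \<le> e" and Hk: "rgraph m {1..k} H"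
begin

abbreviation "d \<equiv> k - m"
abbreviation "n \<equiv> e * (k - m) + m"
abbreviation "R \<equiv> {1..m}"
abbreviation "W \<equiv> {m+1..e * (k - m) + m}"

lemma d1: "d \<ge> 1" using mk k1 by auto
lemma kmd: "k = m + d" using mk k1 by auto

definition Bs :: "nat set set \<Rightarrow> (nat set \<Rightarrow> nat set set) \<Rightarrow> (nat set \<times> nat set) option set" where
  "Bs \<pi> g = Some ` (SIGMA N:\<pi>. g N - {R})"

definition gam :: "(nat set \<times> nat set) option \<Rightarrow> nat set" where
  "gam x = fst (the x)"

definition D where
  "D = (SIGMA \<pi>:part W d. SIGMA g:(\<pi> \<rightarrow>\<^sub>E R_H k m H). cfree \<pi> (Bs \<pi> g) {None} gam)"

definition kp :: "nat set \<Rightarrow> nat set \<Rightarrow> nat \<Rightarrow> nat" where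
  "kp P N = kap m P N"

definition ki :: "nat set \<Rightarrow> nat set \<Rightarrow> nat \<Rightarrow> nat" where
  "ki P N = the_inv_into {1..k} (kp P N)"

definition depth :: "nat set set \<Rightarrow> (nat set \<Rightarrow> nat set set) \<Rightarrow> (nat set \<Rightarrow> (nat set \<times> nat set) option) \<Rightarrow> nat set \<Rightarrow> nat" where
  "depth \<pi> g f N = (LEAST t. (stp f gam (Bs \<pi> g) ^^ t) (f N) = None)"

primrec lapP :: "(nat set \<Rightarrow> (nat set \<times> nat set) option) \<Rightarrow> nat \<Rightarrow> nat set \<Rightarrow> nat set" where
  "lapP f 0 N = R"
| "lapP f (Suc s) N = (case f N of None \<Rightarrow> R | Some (N', L) \<Rightarrow> kp (lapP f s N') N' ` L)"

definition Pl where "Pl \<pi> g f N = lapP f (Suc (depth \<pi> g f N)) N"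
definition Ed where "Ed \<pi> g f N = Pl \<pi> g f N \<union> N"
definition HsN where "HsN \<pi> g f N = img (kp (Pl \<pi> g f N) N) (g N)"
definition Phi where
  "Phi \<pi> g f = (Ed \<pi> g f ` \<pi>,
     \<lambda>E. if E \<in> Ed \<pi> g f ` \<pi> then HsN \<pi> g f (THE N. N \<in> \<pi> \<and> Ed \<pi> g f N = E) else {})"

definition Y where
  "Y = {(T, Hs). H_built_tree k m H n T Hs \<and> card T = e \<and> rooted_at T Hs R}"

lemma kp_bij:
  assumes "finite P" "finite N" "card P = m" "card N = d" "P \<inter> N = {}"
  shows "bij_betw (kp P N) {1..k} (P \<union> N)" "kp P N ` R = P"
  using kap_bij[OF assms] kmd by (simp_all add: kp_def)

lemma ki_kp:
  assumes "finite P" "finite N" "card P = m" "card N = d" "P \<inter> N = {}"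
  shows "bij_betw (ki P N) (P \<union> N) {1..k}"
    "\<And>j. j \<in> {1..k} \<Longrightarrow> ki P N (kp P N j) = j"
    "\<And>x. x \<in> P \<union> N \<Longrightarrow> kp P N (ki P N x) = x"
proof -
  have b: "bij_betw (kp P N) {1..k} (P \<union> N)" by (rule kp_bij[OF assms])
  show "bij_betw (ki P N) (P \<union> N) {1..k}" unfolding ki_def by (rule bij_betw_the_inv_into[OF b])
  show "\<And>j. j \<in> {1..k} \<Longrightarrow> ki P N (kp P N j) = j"
    unfolding ki_def using b by (intro the_inv_into_f_f) (auto simp: bij_betw_def)
  show "\<And>x. x \<in> P \<union> N \<Longrightarrow> kp P N (ki P N x) = x"
    unfolding ki_def using b by (intro f_the_inv_into_f_bij_betw) auto
qed

lemma R_H_props: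
  assumes "G \<in> R_H k m H"
  shows "R \<in> G" "\<And>L. L \<in> G \<Longrightarrow> L \<subseteq> {1..k} \<and> card L = m" "card G = card H"
    "\<exists>\<sigma>. bij_betw \<sigma> {1..k} {1..k} \<and> G = img \<sigma> H"
proof -
  have o: "G \<in> Orb k H" using assms by (simp add: R_H_def Orb_def[OF Hk])
  show "R \<in> G" using assms by (simp add: R_H_def)
  show "\<And>L. L \<in> G \<Longrightarrow> L \<subseteq> {1..k} \<and> card L = m" using Orb_elem[OF Hk o] by auto
  show "card G = card H" using Orb_elem[OF Hk o] by auto
  show "\<exists>\<sigma>. bij_betw \<sigma> {1..k} {1..k} \<and> G = img \<sigma> H"
    using assms by (auto simp: R_H_def H_graph_on_def img_def)
qed

end

locale DT = ST +
  fixes \<pi> :: "nat set set" and g :: "nat set \<Rightarrow> nat set set"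
    and f :: "nat set \<Rightarrow> (nat set \<times> nat set) option"
  assumes inD: "(\<pi>, g, f) \<in> D"
begin

abbreviation "BB \<equiv> Bs \<pi> g"
abbreviation "dep \<equiv> depth \<pi> g f"
abbreviation "pl \<equiv> Pl \<pi> g f"
abbreviation "ed \<equiv> Ed \<pi> g f"
abbreviation "hs \<equiv> HsN \<pi> g f"
abbreviation "st \<equiv> stp f gam BB"

lemma parts: "\<pi> \<in> part W d" "g \<in> \<pi> \<rightarrow>\<^sub>E R_H k m H" "f \<in> cfree \<pi> BB {None} gam"
  using inD by (auto simp: D_def)

lemma blk:
  assumes "N \<in> \<pi>"
  shows "N \<subseteq> W" "card N = d" "finite N" "N \<noteq> {}" "N \<inter> R = {}"
proof -
  show "N \<subseteq> W" "card N = d" using parts(1) assms by (auto simp: part_def)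
  then show "finite N" "N \<noteq> {}" using d1 by (auto intro: card_ge_0_finite)
  show "N \<inter> R = {}" using \<open>N \<subseteq> W\<close> by auto
qed

lemma blk_disj: "N1 \<in> \<pi> \<Longrightarrow> N2 \<in> \<pi> \<Longrightarrow> N1 \<noteq> N2 \<Longrightarrow> N1 \<inter> N2 = {}"
  using parts(1) by (auto simp: part_def)

lemma union_blk: "\<Union>\<pi> = W"
  using parts(1) by (auto simp: part_def)

lemma gN: "N \<in> \<pi> \<Longrightarrow> g N \<in> R_H k m H"
  using parts(2) by auto

lemma fN: "N \<in> \<pi> \<Longrightarrow> f N = None \<or> (\<exists>N' L. f N = Some (N', L) \<and> N' \<in> \<pi> \<and> L \<in> g N' \<and> L \<noteq> R)"
  using parts(3) by (fastforce simp: cfree_def Bs_def)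

lemma fN_Some: "N \<in> \<pi> \<Longrightarrow> f N = Some (N', L) \<Longrightarrow> N' \<in> \<pi> \<and> L \<in> g N' \<and> L \<noteq> R"
  using fN by fastforce

lemma f_reach: "b \<in> BB \<Longrightarrow> \<exists>t. (st ^^ t) b = None"
  using parts(3) by (auto simp: cfree_def)

lemma stp_Some: "Some (N', L) \<in> BB \<Longrightarrow> st (Some (N', L)) = f N'"
  by (simp add: stp_def gam_def)

lemma dep_None: "f N = None \<Longrightarrow> dep N = 0"
  by (simp add: depth_def)

lemma dep_Some:
  assumes N: "N \<in> \<pi>" and fs: "f N = Some (N', L)"
  shows "dep N = Suc (dep N')"
proof -
  have b: "Some (N', L) \<in> BB" using fN_Some[OF N fs] by (auto simp: Bs_def)
  obtain t where t: "(st ^^ t) (Some (N', L)) = None" using f_reach[OF b] by blast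
  have "dep N = (LEAST t. (st ^^ t) (Some (N', L)) = None)" by (simp add: depth_def fs)
  also have "\<dots> = Suc (LEAST t. (st ^^ Suc t) (Some (N', L)) = None)"
    by (rule Least_Suc[of _ t]) (use t in auto)
  also have "(\<lambda>t. (st ^^ Suc t) (Some (N', L))) = (\<lambda>t. (st ^^ t) (f N'))"
    by (simp only: funpow_Suc_right' stp_Some[OF b])
  finally show ?thesis by (simp add: depth_def)
qed

lemma Pl_rec:
  assumes N: "N \<in> \<pi>"
  shows "pl N = (case f N of None \<Rightarrow> R | Some (N', L) \<Rightarrow> kp (pl N') N' ` L)"
proof (cases "f N")
  case None then show ?thesis by (simp add: Pl_def)
next
  case (Some a)
  then obtain N' L where fs: "f N = Some (N', L)" by (cases a) auto
  have "pl N = kp (lapP f (dep N) N') N' ` L" by (simp add: Pl_def fs)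
  also have "lapP f (dep N) N' = pl N'" using dep_Some[OF N fs] by (simp add: Pl_def)
  finally show ?thesis by (simp add: fs)
qed

lemma Pl_None: "N \<in> \<pi> \<Longrightarrow> f N = None \<Longrightarrow> pl N = R"
  using Pl_rec by simp

lemma Pl_Some: "N \<in> \<pi> \<Longrightarrow> f N = Some (N', L) \<Longrightarrow> pl N = kp (pl N') N' ` L"
  using Pl_rec by simp

lemma Pl_props:
  assumes "N \<in> \<pi>"
  shows "finite (pl N) \<and> card (pl N) = m \<and> pl N \<subseteq> R \<union> \<Union>{N''\<in>\<pi>. dep N'' < dep N}"
  using assms
proof (induction "dep N" arbitrary: N rule: less_induct)
  case less
  show ?case
  proof (cases "f N")
    case None then show ?thesis using Pl_None[OF less.prems] by simp
  next
    case (Some a)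
    then obtain N' L where fs: "f N = Some (N', L)" by (cases a) auto
    have N'L: "N' \<in> \<pi>" "L \<in> g N'" "L \<noteq> R" using fN_Some[OF less.prems fs] by auto
    have dN: "dep N = Suc (dep N')" using dep_Some[OF less.prems fs] .
    have IH: "finite (pl N') \<and> card (pl N') = m \<and> pl N' \<subseteq> R \<union> \<Union>{N''\<in>\<pi>. dep N'' < dep N'}"
      using less.hyps[of N'] dN N'L by simp
    have disj: "pl N' \<inter> N' = {}"
    proof -
      have "N' \<inter> N'' = {}" if "N'' \<in> \<pi>" "dep N'' < dep N'" for N''
        using blk_disj[OF N'L(1) that(1)] that by auto
      then show ?thesis using IH blk(5)[OF N'L(1)] by blast
    qed
    have L: "L \<subseteq> {1..k}" "card L = m" using R_H_props(2)[OF gN[OF N'L(1)] N'L(2)] by auto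
    have bj: "bij_betw (kp (pl N') N') {1..k} (pl N' \<union> N')"
      using kp_bij IH blk[OF N'L(1)] disj by auto
    have pN: "pl N = kp (pl N') N' ` L" using Pl_Some[OF less.prems fs] .
    have "card (pl N) = m" using pN L bj card_image[of "kp (pl N') N'" L]
      by (metis bij_betw_def inj_on_subset)
    moreover have "pl N \<subseteq> pl N' \<union> N'" using pN L bj by (auto simp: bij_betw_def)
    moreover have "pl N' \<union> N' \<subseteq> R \<union> \<Union>{N''\<in>\<pi>. dep N'' < dep N}"
      using IH dN N'L(1) by auto
    moreover have "finite (pl N' \<union> N')" using IH blk(3)[OF N'L(1)] by simp
    ultimately show ?thesis by (meson finite_subset subset_trans)
  qed
qed

lemma Pl_fin: "N \<in> \<pi> \<Longrightarrow> finite (pl N)" using Pl_props by blast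
lemma Pl_card: "N \<in> \<pi> \<Longrightarrow> card (pl N) = m" using Pl_props by blast
lemma Pl_sub: "N \<in> \<pi> \<Longrightarrow> pl N \<subseteq> R \<union> \<Union>{N''\<in>\<pi>. dep N'' < dep N}" using Pl_props by blast

lemma Pl_disj: "N \<in> \<pi> \<Longrightarrow> pl N \<inter> N = {}"
proof -
  assume N: "N \<in> \<pi>"
  have "N \<inter> N'' = {}" if "N'' \<in> \<pi>" "dep N'' < dep N" for N''
    using blk_disj[OF N that(1)] that by auto
  then show ?thesis using Pl_sub[OF N] blk(5)[OF N] by blast
qed

lemma blk_in_edge:
  assumes "N1 \<in> \<pi>" "N2 \<in> \<pi>" "N1 \<inter> ed N2 \<noteq> {}"
  shows "N1 = N2 \<or> dep N1 < dep N2"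
proof (rule ccontr)
  assume c: "\<not> (N1 = N2 \<or> dep N1 < dep N2)"
  then have "N1 \<inter> N2 = {}" using blk_disj assms by auto
  then obtain v where v: "v \<in> N1" "v \<in> pl N2" using assms(3) by (auto simp: Ed_def)
  then have "v \<in> R \<union> \<Union>{N''\<in>\<pi>. dep N'' < dep N2}" using Pl_sub[OF assms(2)] by auto
  moreover have "v \<notin> R" using v blk(5)[OF assms(1)] by auto
  ultimately obtain N'' where N'': "N'' \<in> \<pi>" "dep N'' < dep N2" "v \<in> N''" by auto
  then have "N'' = N1" using blk_disj[OF assms(1) N''(1)] v by auto
  then show False using c N'' by auto
qed

lemma Ed_props:
  assumes N: "N \<in> \<pi>"
  shows "finite (ed N)" "card (ed N) = k" "ed N \<subseteq> {1..n}" "N \<subseteq> ed N" "pl N \<subseteq> ed N"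
proof -
  show "finite (ed N)" using Pl_fin[OF N] blk(3)[OF N] by (simp add: Ed_def)
  show "card (ed N) = k" using Pl_fin[OF N] blk(3)[OF N] Pl_disj[OF N] Pl_card[OF N] blk(2)[OF N] kmd
    by (simp add: Ed_def card_Un_disjoint)
  have "\<Union>{N''\<in>\<pi>. dep N'' < dep N} \<subseteq> W" using union_blk by auto
  then have "pl N \<subseteq> R \<union> W" using Pl_sub[OF N] by blast
  moreover have "R \<union> W \<subseteq> {1..n}" by auto
  ultimately show "ed N \<subseteq> {1..n}" using blk(1)[OF N] unfolding Ed_def by blast
  show "N \<subseteq> ed N" "pl N \<subseteq> ed N" by (auto simp: Ed_def)
qed

lemma Ed_inj: "inj_on ed \<pi>"
proof (rule inj_onI)
  fix N1 N2 assume N: "N1 \<in> \<pi>" "N2 \<in> \<pi>" "ed N1 = ed N2"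
  show "N1 = N2"
  proof (rule ccontr)
    assume ne: "N1 \<noteq> N2"
    have "N1 \<inter> ed N2 \<noteq> {}" using N Ed_props(4)[OF N(1)] blk(4)[OF N(1)] by auto
    then have "dep N1 < dep N2" using blk_in_edge N ne by auto
    moreover have "N2 \<inter> ed N1 \<noteq> {}" using N Ed_props(4)[OF N(2)] blk(4)[OF N(2)] by auto
    then have "dep N2 < dep N1" using blk_in_edge N ne by auto
    ultimately show False by simp
  qed
qed

lemma pl_ed_blk: "N \<in> \<pi> \<Longrightarrow> ed N - pl N = N"
  using Pl_disj by (auto simp: Ed_def)

lemma HsN_props:
  assumes N: "N \<in> \<pi>"
  shows "H_graph_on k H (ed N) (hs N)" "pl N \<in> hs N" "\<And>L. L \<in> hs N \<Longrightarrow> L \<subseteq> ed N \<and> card L = m"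
    "bij_betw (kp (pl N) N) {1..k} (ed N)"
proof -
  have bj: "bij_betw (kp (pl N) N) {1..k} (pl N \<union> N)"
    using kp_bij Pl_fin[OF N] blk[OF N] Pl_card[OF N] Pl_disj[OF N] by auto
  then show "bij_betw (kp (pl N) N) {1..k} (ed N)" by (simp add: Ed_def)
  have kR: "kp (pl N) N ` R = pl N"
    using kp_bij Pl_fin[OF N] blk[OF N] Pl_card[OF N] Pl_disj[OF N] by auto
  obtain \<sigma> where s: "bij_betw \<sigma> {1..k} {1..k}" "g N = img \<sigma> H" using R_H_props(4)[OF gN[OF N]] by blast
  have "hs N = img (kp (pl N) N \<circ> \<sigma>) H" by (simp add: HsN_def s img_comp)
  moreover have "bij_betw (kp (pl N) N \<circ> \<sigma>) {1..k} (ed N)"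
    using bij_betw_trans[OF s(1) bj] by (simp add: Ed_def)
  ultimately show "H_graph_on k H (ed N) (hs N)" by (auto simp: H_graph_on_def img_def)
  have "kp (pl N) N ` R \<in> hs N" unfolding HsN_def img_def
    using R_H_props(1)[OF gN[OF N]] by (rule imageI)
  then show "pl N \<in> hs N" using kR by simp
  show "\<And>L. L \<in> hs N \<Longrightarrow> L \<subseteq> ed N \<and> card L = m"
  proof -
    fix L assume "L \<in> hs N"
    then obtain L0 where L0: "L0 \<in> g N" "L = kp (pl N) N ` L0" by (auto simp: HsN_def img_def)
    have L0k: "L0 \<subseteq> {1..k}" "card L0 = m" using R_H_props(2)[OF gN[OF N] L0(1)] by auto
    have b2: "bij_betw (kp (pl N) N) {1..k} (ed N)" using bj by (simp add: Ed_def)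
    have "L \<subseteq> ed N" using L0(2) L0k(1) b2 unfolding bij_betw_def by blast
    moreover have "inj_on (kp (pl N) N) L0" using b2 L0k(1) unfolding bij_betw_def by (blast intro: inj_on_subset)
    then have "card L = m" using L0(2) L0k(2) by (simp add: card_image)
    ultimately show "L \<subseteq> ed N \<and> card L = m" by simp
  qed
qed

lemma parent_facts:
  assumes N: "N \<in> \<pi>" and fs: "f N = Some (N', L)"
  shows "N' \<in> \<pi>" "pl N \<subseteq> ed N'" "pl N \<noteq> pl N'" "pl N \<inter> N' \<noteq> {}" "pl N \<noteq> R" "pl N \<in> hs N'"
    "N' \<noteq> N" "L = ki (pl N') N' ` pl N"
proof -
  have N'L: "N' \<in> \<pi>" "L \<in> g N'" "L \<noteq> R" using fN_Some[OF N fs] by auto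
  show "N' \<in> \<pi>" by fact
  have L: "L \<subseteq> {1..k}" "card L = m" using R_H_props(2)[OF gN[OF N'L(1)] N'L(2)] by auto
  have bj: "bij_betw (kp (pl N') N') {1..k} (ed N')" using HsN_props(4)[OF N'L(1)] .
  have kR: "kp (pl N') N' ` R = pl N'"
    using kp_bij Pl_fin[OF N'L(1)] blk[OF N'L(1)] Pl_card[OF N'L(1)] Pl_disj[OF N'L(1)] by auto
  have pN: "pl N = kp (pl N') N' ` L" using Pl_Some[OF N fs] .
  show "pl N \<subseteq> ed N'" using pN L bj by (auto simp: bij_betw_def)
  have inj: "inj_on (kp (pl N') N') {1..k}" using bj by (simp add: bij_betw_def)
  show ne: "pl N \<noteq> pl N'"
  proof
    assume "pl N = pl N'"
    then have "kp (pl N') N' ` L = kp (pl N') N' ` R" using pN kR by simp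
    then have "L = R" using inj L inj_on_image_eq_iff[of "kp (pl N') N'" "{1..k}" L R] kmd by auto
    then show False using N'L by simp
  qed
  show "pl N \<inter> N' \<noteq> {}"
  proof
    assume "pl N \<inter> N' = {}"
    then have "pl N \<subseteq> pl N'" using \<open>pl N \<subseteq> ed N'\<close> by (auto simp: Ed_def)
    then have "pl N = pl N'" using Pl_card[OF N] Pl_card[OF N'L(1)] Pl_fin[OF N'L(1)]
      by (simp add: card_subset_eq)
    then show False using ne by simp
  qed
  then show "pl N \<noteq> R" using blk(5)[OF N'L(1)] by auto
  show "pl N \<in> hs N'" using pN N'L(2) by (auto simp: HsN_def img_def)
  show "N' \<noteq> N" using dep_Some[OF N fs] by auto
  show "L = ki (pl N') N' ` pl N"
  proof -
    have "ki (pl N') N' ` pl N = (ki (pl N') N' \<circ> kp (pl N') N') ` L" by (simp add: pN image_comp)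
    also have "\<dots> = id ` L"
    proof (rule image_cong[OF refl])
      fix j assume "j \<in> L"
      then have "j \<in> {1..k}" using L by auto
      then show "(ki (pl N') N' \<circ> kp (pl N') N') j = id j"
        using ki_kp(2)[OF Pl_fin[OF N'L(1)] blk(3)[OF N'L(1)] Pl_card[OF N'L(1)] blk(2)[OF N'L(1)] Pl_disj[OF N'L(1)]]
        by simp
    qed
    also have "\<dots> = L" by simp
    finally show ?thesis by simp
  qed
qed

lemma Pl_R_iff: "N \<in> \<pi> \<Longrightarrow> pl N = R \<longleftrightarrow> f N = None"
proof (cases "f N")
  case None
  assume "N \<in> \<pi>" then show ?thesis using Pl_None None by simp
next
  case (Some a)
  assume N: "N \<in> \<pi>"
  obtain N' L where fs: "f N = Some (N', L)" using Some by (cases a) auto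
  then show ?thesis using parent_facts(5)[OF N fs] by simp
qed

lemma pi_ne: "\<pi> \<noteq> {}"
proof -
  have "W \<noteq> {}" using e1 d1 by (auto simp: not_less_eq_eq)
  then show ?thesis using union_blk by auto
qed

lemma root_ex: "\<exists>N0\<in>\<pi>. f N0 = None"
proof -
  obtain N where N: "N \<in> \<pi>" using pi_ne by auto
  have "\<exists>N0\<in>\<pi>. f N0 = None" if "N \<in> \<pi>" "dep N = t" for t N
    using that
  proof (induction t arbitrary: N rule: less_induct)
    case (less t)
    show ?case
    proof (cases "f N")
      case None then show ?thesis using less.prems by auto
    next
      case (Some a)
      then obtain N' L where fs: "f N = Some (N', L)" by (cases a) auto
      show ?thesis using less.IH[of "dep N'" N'] dep_Some[OF less.prems(1) fs] less.prems fN_Some[OF less.prems(1) fs]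
        by auto
    qed
  qed
  then show ?thesis using N by blast
qed

lemma card_pi: "card \<pi> = e"
proof -
  have fin: "finite \<pi>"
  proof (rule finite_subset[of _ "Pow W"])
    show "\<pi> \<subseteq> Pow W" using blk(1) by auto
  qed simp
  have "card W = card (\<Union>\<pi>)" using union_blk by simp
  also have "\<dots> = (\<Sum>N\<in>\<pi>. card N)"
    using fin blk(3) blk_disj by (intro card_UN_disjoint[of \<pi> "\<lambda>x. x", simplified]) auto
  also have "\<dots> = d * card \<pi>" using blk(2) by simp
  finally have "d * e = d * card \<pi>" by (simp add: mult.commute)
  moreover have "d \<noteq> 0" using d1 by simp
  ultimately show ?thesis by simp
qed

lemma pi_fin: "finite \<pi>"
proof -
  have "0 < card \<pi>" using card_pi e1 by simp
  then show ?thesis by (rule card_ge_0_finite)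
qed

lemma root_dep: "N \<in> \<pi> \<Longrightarrow> dep N = 0 \<Longrightarrow> f N = None"
proof (rule ccontr)
  assume N: "N \<in> \<pi>" "dep N = 0" "f N \<noteq> None"
  then obtain N' L where "f N = Some (N', L)" by (cases "f N") auto
  then show False using dep_Some[OF N(1)] N(2) by simp
qed

lemma eq_by_card: "finite B \<Longrightarrow> A \<subseteq> B \<Longrightarrow> card A = m \<Longrightarrow> card B = m \<Longrightarrow> A = B"
  by (simp add: card_subset_eq)

lemma pair_aux:
  assumes N1: "N1 \<in> \<pi>" and N2: "N2 \<in> \<pi>" and ne: "N1 \<noteq> N2" and dd: "dep N2 \<le> dep N1"
    and sub: "pl N1 \<subseteq> ed N2"
  shows "pl N1 \<in> hs N2"
proof (cases "f N1")
  case None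
  then have p1: "pl N1 = R" using Pl_None[OF N1] by simp
  then have "R \<subseteq> pl N2" using sub blk(5)[OF N2] by (auto simp: Ed_def)
  then have "R = pl N2" using eq_by_card[OF Pl_fin[OF N2]] Pl_card[OF N2] by simp
  then show ?thesis using p1 HsN_props(2)[OF N2] by simp
next
  case (Some a)
  then obtain N' L where fs: "f N1 = Some (N', L)" by (cases a) auto
  note pf = parent_facts[OF N1 fs]
  show ?thesis
  proof (cases "N' = N2")
    case True then show ?thesis using pf(6) by simp
  next
    case False
    obtain v where v: "v \<in> pl N1" "v \<in> N'" using pf(4) by auto
    have "N' \<inter> ed N2 \<noteq> {}" using v sub by auto
    then have d1': "dep N' < dep N2" using blk_in_edge[OF pf(1) N2] False by auto
    have dN1: "dep N1 = Suc (dep N')" using dep_Some[OF N1 fs] .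
    then have dN2: "dep N2 = dep N1" using dd d1' by simp
    then have "dep N2 \<noteq> 0" using dN1 by simp
    then have "f N2 \<noteq> None" using dep_None by metis
    then obtain N'' L'' where fs2: "f N2 = Some (N'', L'')" by (cases "f N2") auto
    note pf2 = parent_facts[OF N2 fs2]
    have dN2': "dep N2 = Suc (dep N'')" using dep_Some[OF N2 fs2] .
    have "v \<notin> N2" using v blk_disj[OF pf(1) N2 False] by auto
    then have "v \<in> pl N2" using v sub by (auto simp: Ed_def)
    then have "N' \<inter> ed N'' \<noteq> {}" using v pf2(2) by auto
    then have "N' = N'' \<or> dep N' < dep N''" using blk_in_edge[OF pf(1) pf2(1)] by simp
    then have eqN: "N' = N''" using dN1 dN2 dN2' by auto
    have "N2 \<inter> ed N' = {}"
    proof (rule ccontr)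
      assume "N2 \<inter> ed N' \<noteq> {}"
      then have "N2 = N' \<or> dep N2 < dep N'" using blk_in_edge[OF N2 pf(1)] by simp
      then show False using False dN2 dN1 by auto
    qed
    then have "pl N1 \<inter> N2 = {}" using pf(2) by auto
    then have "pl N1 \<subseteq> pl N2" using sub by (auto simp: Ed_def)
    then have "pl N1 = pl N2" using eq_by_card[OF Pl_fin[OF N2]] Pl_card[OF N1] Pl_card[OF N2] by simp
    then show ?thesis using HsN_props(2)[OF N2] by simp
  qed
qed

lemma pair_aux2:
  assumes N1: "N1 \<in> \<pi>" and N2: "N2 \<in> \<pi>" and ne: "N1 \<noteq> N2" and dd: "dep N2 \<le> dep N1"
    and c: "card (ed N1 \<inter> ed N2) = m"
  shows "ed N1 \<inter> ed N2 \<in> hs N1 \<and> ed N1 \<inter> ed N2 \<in> hs N2"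
proof -
  have "N1 \<inter> ed N2 = {}"
  proof (rule ccontr)
    assume "N1 \<inter> ed N2 \<noteq> {}"
    then show False using blk_in_edge[OF N1 N2] ne dd by auto
  qed
  then have "ed N1 \<inter> ed N2 \<subseteq> pl N1" by (auto simp: Ed_def)
  then have eq: "ed N1 \<inter> ed N2 = pl N1" using eq_by_card[OF Pl_fin[OF N1]] c Pl_card[OF N1] by simp
  then have "pl N1 \<subseteq> ed N2" by auto
  then have "pl N1 \<in> hs N2" using pair_aux[OF N1 N2 ne dd] by simp
  then show ?thesis using eq HsN_props(2)[OF N1] by simp
qed

lemma pair:
  assumes N1: "N1 \<in> \<pi>" and N2: "N2 \<in> \<pi>" and ne: "N1 \<noteq> N2"
    and c: "card (ed N1 \<inter> ed N2) = m"
  shows "ed N1 \<inter> ed N2 \<in> hs N1 \<and> ed N1 \<inter> ed N2 \<in> hs N2"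
proof (cases "dep N2 \<le> dep N1")
  case True then show ?thesis using pair_aux2[OF N1 N2 ne True c] by simp
next
  case False
  then have "dep N1 \<le> dep N2" by simp
  moreover have "card (ed N2 \<inter> ed N1) = m" using c by (simp add: Int_commute)
  ultimately have "ed N2 \<inter> ed N1 \<in> hs N2 \<and> ed N2 \<inter> ed N1 \<in> hs N1"
    using pair_aux2[OF N2 N1 ne[symmetric]] by simp
  then show ?thesis by (simp add: Int_commute)
qed

lemma in_take_nth: "x \<in> set (take i xs) \<Longrightarrow> \<exists>h<i. h < length xs \<and> xs ! h = x"
  by (auto simp: in_set_conv_nth)

lemma sorted_less_idx:
  assumes "sorted (map dep bs)" "i < length bs" "j < length bs" "dep (bs ! j) < dep (bs ! i)"
  shows "j < i"
proof (rule ccontr)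
  assume "\<not> j < i"
  then have "(map dep bs) ! i \<le> (map dep bs) ! j" using assms by (intro sorted_nth_mono) auto
  then show False using assms by simp
qed

lemma attach:
  assumes bs: "distinct bs" "set bs = \<pi>" "sorted (map dep bs)"
    and i: "1 \<le> i" "i < length bs"
  shows "\<exists>j<i. pl (bs ! i) \<subseteq> ed (bs ! j) \<and> ed (bs ! i) \<inter> ed (bs ! j) = pl (bs ! i)"
proof -
  let ?N = "bs ! i"
  have N: "?N \<in> \<pi>" using bs i by auto
  show ?thesis
  proof (cases "f ?N")
    case None
    obtain N0 where N0: "N0 \<in> \<pi>" "f N0 = None" using root_ex by blast
    then obtain j0 where j0: "j0 < length bs" "bs ! j0 = N0" using bs by (auto simp: in_set_conv_nth)
    have "(map dep bs) ! 0 \<le> (map dep bs) ! j0"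
      using sorted_nth_mono[OF bs(3), of 0 j0] j0 by simp
    moreover have "0 < length bs" using i(2) by linarith
    ultimately have "dep (bs ! 0) \<le> dep (bs ! j0)" using j0 by simp
    then have "dep (bs ! 0) = 0" using j0 N0 dep_None by simp
    moreover have b0: "bs ! 0 \<in> \<pi>" using bs(2) \<open>0 < length bs\<close> nth_mem by blast
    ultimately have f0: "f (bs ! 0) = None" using root_dep by blast
    have ne: "bs ! 0 \<noteq> ?N" using nth_eq_iff_index_eq[OF bs(1) \<open>0 < length bs\<close> i(2)] i(1) by simp
    have p0: "pl (bs ! 0) = R" using Pl_None[OF b0 f0] .
    have pN: "pl ?N = R" using Pl_None[OF N None] .
    have "ed ?N \<inter> ed (bs ! 0) = R" using p0 pN blk(5)[OF N] blk(5)[OF b0] blk_disj[OF N b0 ne[symmetric]]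
      by (auto simp: Ed_def)
    then show ?thesis using i p0 pN by (intro exI[of _ 0]) (auto simp: Ed_def)
  next
    case (Some a)
    then obtain N' L where fs: "f ?N = Some (N', L)" by (cases a) auto
    note pf = parent_facts[OF N fs]
    obtain j where j: "j < length bs" "bs ! j = N'" using pf(1) bs by (auto simp: in_set_conv_nth)
    have "dep N' < dep ?N" using dep_Some[OF N fs] by simp
    then have ji: "j < i" using sorted_less_idx[OF bs(3) i(2) j(1)] j by simp
    have "?N \<inter> ed N' = {}"
    proof (rule ccontr)
      assume "?N \<inter> ed N' \<noteq> {}"
      then show False using blk_in_edge[OF N pf(1)] pf(7) dep_Some[OF N fs] by auto
    qed
    then have "ed ?N \<inter> ed N' = pl ?N" using pf(2) by (auto simp: Ed_def)
    then show ?thesis using ji j pf(2) by auto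
  qed
qed

lemma later_disj:
  assumes bs: "distinct bs" "set bs = \<pi>" "sorted (map dep bs)"
    and i: "i < length bs" and h: "h < i"
  shows "bs ! i \<inter> ed (bs ! h) = {}"
proof (rule ccontr)
  assume c: "bs ! i \<inter> ed (bs ! h) \<noteq> {}"
  have ne: "bs ! i \<noteq> bs ! h" using bs(1) i h nth_eq_iff_index_eq[OF bs(1)] by auto
  have "dep (bs ! i) < dep (bs ! h)" using blk_in_edge[OF _ _ c] ne bs i h by auto
  then have "i < h" using sorted_less_idx[OF bs(3)] i h by auto
  then show False using h by simp
qed

lemma valid_Es:
  assumes bs: "distinct bs" "set bs = \<pi>" "sorted (map dep bs)"
  shows "\<forall>i. 1 \<le> i \<and> i < length (map ed bs) \<longrightarrow>
     (\<exists>j<i. card (map ed bs ! i \<inter> map ed bs ! j) = m \<and>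
        (map ed bs ! i - map ed bs ! j) \<inter> \<Union>(set (take i (map ed bs))) = {})"
proof (intro allI impI)
  fix i assume i: "1 \<le> i \<and> i < length (map ed bs)"
  then have i': "1 \<le> i" "i < length bs" by auto
  obtain j where j: "j < i" "pl (bs ! i) \<subseteq> ed (bs ! j)" "ed (bs ! i) \<inter> ed (bs ! j) = pl (bs ! i)"
    using attach[OF bs i'] by blast
  have N: "bs ! i \<in> \<pi>" using bs i' by auto
  have "card (map ed bs ! i \<inter> map ed bs ! j) = m" using j i' Pl_card[OF N] by simp
  moreover have "(map ed bs ! i - map ed bs ! j) \<inter> \<Union>(set (take i (map ed bs))) = {}"
  proof -
    have "map ed bs ! i - map ed bs ! j \<subseteq> bs ! i" using j i' by (auto simp: Ed_def)
    moreover have "bs ! i \<inter> \<Union>(set (take i (map ed bs))) = {}"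
    proof -
      have "bs ! i \<inter> E = {}" if E: "E \<in> set (take i (map ed bs))" for E
      proof -
        obtain h where h: "h < i" "h < length (map ed bs)" "map ed bs ! h = E" using in_take_nth[OF E] by blast
        then show ?thesis using later_disj[OF bs i'(2) h(1)] by auto
      qed
      then show ?thesis by blast
    qed
    ultimately show ?thesis by blast
  qed
  ultimately show "\<exists>j<i. card (map ed bs ! i \<inter> map ed bs ! j) = m \<and>
        (map ed bs ! i - map ed bs ! j) \<inter> \<Union>(set (take i (map ed bs))) = {}" using j(1) by blast
qed

lemma ex_bs: "\<exists>bs. distinct bs \<and> set bs = \<pi> \<and> sorted (map dep bs)"
proof -
  obtain xs where "distinct xs" "set xs = \<pi>" using finite_distinct_list[OF pi_fin] by blast
  then show ?thesis by (intro exI[of _ "sort_key dep xs"]) auto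
qed

lemma root_R: "\<exists>N0\<in>\<pi>. pl N0 = R"
  using root_ex Pl_None by blast

lemma union_T: "\<Union>(ed ` \<pi>) = {1..n}"
proof
  show "\<Union>(ed ` \<pi>) \<subseteq> {1..n}" using Ed_props(3) by auto
  show "{1..n} \<subseteq> \<Union>(ed ` \<pi>)"
  proof
    fix x assume x: "x \<in> {1..n}"
    show "x \<in> \<Union>(ed ` \<pi>)"
    proof (cases "x \<in> R")
      case True
      obtain N0 where "N0 \<in> \<pi>" "pl N0 = R" using root_R by blast
      then show ?thesis using True by (auto simp: Ed_def)
    next
      case False
      then have "x \<in> W" using x by auto
      then have "x \<in> \<Union>\<pi>" using union_blk by simp
      then obtain N where "N \<in> \<pi>" "x \<in> N" by auto
      then show ?thesis by (auto simp: Ed_def)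
    qed
  qed
qed

lemma km_tree_T: "km_tree k m n (ed ` \<pi>)"
proof -
  obtain bs where bs: "distinct bs" "set bs = \<pi>" "sorted (map dep bs)" using ex_bs by blast
  show ?thesis unfolding km_tree_def
  proof (intro conjI)
    show "ed ` \<pi> \<noteq> {}" using pi_ne by simp
    show "rgraph k {1..n} (ed ` \<pi>)" using Ed_props by (auto simp: rgraph_def)
    show "\<Union>(ed ` \<pi>) = {1..n}" by (rule union_T)
    show "\<exists>Es. distinct Es \<and> set Es = ed ` \<pi> \<and>
      (\<forall>i. 1 \<le> i \<and> i < length Es \<longrightarrow>
        (\<exists>j<i. card (Es ! i \<inter> Es ! j) = m \<and> (Es ! i - Es ! j) \<inter> \<Union>(set (take i Es)) = {}))"
    proof (intro exI conjI)
      show "distinct (map ed bs)" using bs Ed_inj by (simp add: distinct_map)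
      show "set (map ed bs) = ed ` \<pi>" using bs by simp
    qed (rule valid_Es[OF bs])
  qed
qed

lemma the_blk: "N \<in> \<pi> \<Longrightarrow> (THE N'. N' \<in> \<pi> \<and> ed N' = ed N) = N"
  by (rule the_equality) (use Ed_inj in \<open>auto simp: inj_on_def\<close>)

lemma Phi_snd: "N \<in> \<pi> \<Longrightarrow> snd (Phi \<pi> g f) (ed N) = hs N"
  by (auto simp: Phi_def the_blk)

lemma Phi_in_Y: "Phi \<pi> g f \<in> Y"
proof -
  define Hs where "Hs = snd (Phi \<pi> g f)"
  have P: "Phi \<pi> g f = (ed ` \<pi>, Hs)" by (simp add: Phi_def Hs_def)
  have hsE: "N \<in> \<pi> \<Longrightarrow> Hs (ed N) = hs N" for N using Phi_snd by (simp add: Hs_def)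
  have "H_built_tree k m H n (ed ` \<pi>) Hs"
    unfolding H_built_tree_def
  proof (intro conjI)
    show "km_tree k m n (ed ` \<pi>)" by (rule km_tree_T)
    show "\<forall>E\<in>ed ` \<pi>. H_graph_on k H E (Hs E)" using HsN_props(1) hsE by auto
    show "\<forall>E. E \<notin> ed ` \<pi> \<longrightarrow> Hs E = {}" by (simp add: Hs_def Phi_def)
    show "\<forall>E\<in>ed ` \<pi>. \<forall>E'\<in>ed ` \<pi>. E \<noteq> E' \<and> card (E \<inter> E') = m \<longrightarrow> E \<inter> E' \<in> Hs E \<and> E \<inter> E' \<in> Hs E'"
    proof (intro ballI impI)
      fix E E' assume E: "E \<in> ed ` \<pi>" "E' \<in> ed ` \<pi>" "E \<noteq> E' \<and> card (E \<inter> E') = m"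
      then obtain N1 N2 where N: "N1 \<in> \<pi>" "N2 \<in> \<pi>" "E = ed N1" "E' = ed N2" by auto
      then have "N1 \<noteq> N2" using E by auto
      then show "E \<inter> E' \<in> Hs E \<and> E \<inter> E' \<in> Hs E'" using pair[OF N(1,2)] E N hsE by auto
    qed
  qed
  moreover have "card (ed ` \<pi>) = e" using card_pi Ed_inj by (simp add: card_image)
  moreover have "rooted_at (ed ` \<pi>) Hs R"
  proof -
    obtain N0 where "N0 \<in> \<pi>" "pl N0 = R" using root_R by blast
    then show ?thesis using HsN_props(2) hsE by (force simp: rooted_at_def)
  qed
  ultimately show ?thesis by (simp add: Y_def P)
qed

lemma bs0_root:
  assumes bs: "distinct bs" "set bs = \<pi>" "sorted (map dep bs)"
  shows "bs \<noteq> []" "pl (bs ! 0) = R"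
proof -
  show ne: "bs \<noteq> []" using bs(2) pi_ne by auto
  then have l0: "0 < length bs" by simp
  obtain N0 where N0: "N0 \<in> \<pi>" "f N0 = None" using root_ex by blast
  then obtain j0 where j0: "j0 < length bs" "bs ! j0 = N0" using bs by (auto simp: in_set_conv_nth)
  have "(map dep bs) ! 0 \<le> (map dep bs) ! j0"
    using sorted_nth_mono[OF bs(3), of 0 j0] j0 by simp
  then have "dep (bs ! 0) \<le> dep (bs ! j0)" using j0 l0 by simp
  then have "dep (bs ! 0) = 0" using j0 N0 dep_None by simp
  moreover have b0: "bs ! 0 \<in> \<pi>" using bs(2) l0 nth_mem by blast
  ultimately have f0: "f (bs ! 0) = None" using root_dep by blast
  show "pl (bs ! 0) = R" using Pl_None[OF b0 f0] .
qed

lemma g_from_hs: "N \<in> \<pi> \<Longrightarrow> g N = img (ki (pl N) N) (hs N)"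
proof -
  assume N: "N \<in> \<pi>"
  have "img (ki (pl N) N) (hs N) = img (ki (pl N) N \<circ> kp (pl N) N) (g N)"
    by (simp add: HsN_def img_comp)
  also have "\<dots> = img id (g N)"
  proof (rule img_cong)
    fix x assume "x \<in> \<Union>(g N)"
    then obtain X where X: "X \<in> g N" "x \<in> X" by auto
    then have "x \<in> {1..k}" using R_H_props(2)[OF gN[OF N] X(1)] by blast
    then show "(ki (pl N) N \<circ> kp (pl N) N) x = id x"
      using ki_kp(2)[OF Pl_fin[OF N] blk(3)[OF N] Pl_card[OF N] blk(2)[OF N] Pl_disj[OF N]] by simp
  qed
  finally show ?thesis by (simp add: img_id)
qed

end

locale DTE = DT +
  fixes Es :: "nat set list"
  assumes Es_dist: "distinct Es" and Es_set: "set Es = Ed \<pi> g f ` \<pi>"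
    and Es_valid: "\<forall>i. 1 \<le> i \<and> i < length Es \<longrightarrow>
        (\<exists>j<i. card (Es ! i \<inter> Es ! j) = m \<and> (Es ! i - Es ! j) \<inter> \<Union>(set (take i Es)) = {})"
    and Es_ne: "Es \<noteq> []" and Es_R: "R \<subseteq> Es ! 0"
begin

definition bl where "bl i = (THE N. N \<in> \<pi> \<and> ed N = Es ! i)"
definition Qf where "Qf i = (if i = 0 then R else Es ! i \<inter> \<Union>(set (take i Es)))"

lemma bl_props: "i < length Es \<Longrightarrow> bl i \<in> \<pi> \<and> ed (bl i) = Es ! i"
proof -
  assume i: "i < length Es"
  then have "Es ! i \<in> ed ` \<pi>" using Es_set nth_mem by metis
  then obtain N where N: "N \<in> \<pi>" "ed N = Es ! i" by auto
  have "bl i = N" unfolding bl_def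
    by (rule the_equality) (use N Ed_inj in \<open>auto simp: inj_on_def\<close>)
  then show ?thesis using N by simp
qed

lemma bl_inj: "i < length Es \<Longrightarrow> j < length Es \<Longrightarrow> bl i = bl j \<Longrightarrow> i = j"
  using bl_props Es_dist nth_eq_iff_index_eq by metis

lemma QP: "i < length Es \<Longrightarrow> Qf i = pl (bl i) \<and> \<Union>(set (take (Suc i) Es)) = R \<union> \<Union>(bl ` {..i})"
proof (induction i)
  case 0
  have b: "bl 0 \<in> \<pi>" "ed (bl 0) = Es ! 0" using bl_props 0 by auto
  have "R \<subseteq> pl (bl 0)" using Es_R b blk(5)[OF b(1)] by (auto simp: Ed_def)
  moreover have "card R = m" by simp
  ultimately have q: "pl (bl 0) = R" using eq_by_card[OF Pl_fin[OF b(1)]] Pl_card[OF b(1)] by metis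
  have "take (Suc 0) Es = [Es ! 0]" using Es_ne by (cases Es) auto
  then have "\<Union>(set (take (Suc 0) Es)) = pl (bl 0) \<union> bl 0" using b by (simp add: Ed_def)
  then show ?case using q by (simp add: Qf_def)
next
  case (Suc i)
  let ?E = "Es ! Suc i" and ?U = "\<Union>(set (take (Suc i) Es))" and ?N = "bl (Suc i)"
  have IH: "?U = R \<union> \<Union>(bl ` {..i})" using Suc by simp
  have b: "?N \<in> \<pi>" "ed ?N = ?E" using bl_props Suc.prems by auto
  obtain j where j: "j < Suc i" "card (?E \<inter> Es ! j) = m" "(?E - Es ! j) \<inter> ?U = {}"
    using Es_valid Suc.prems by (metis le_add1 plus_1_eq_Suc)
  have "Es ! j \<in> set (take (Suc i) Es)" using j(1) Suc.prems by (auto simp: in_set_conv_nth)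
  then have "Es ! j \<subseteq> ?U" by auto
  then have EU: "?E \<inter> ?U = ?E \<inter> Es ! j" using j(3) by blast
  have NU: "?N \<inter> ?U = {}"
  proof -
    have "?N \<inter> bl h = {}" if "h \<le> i" for h
    proof -
      have "bl h \<noteq> ?N" using bl_inj[of h "Suc i"] that Suc.prems by auto
      then show ?thesis using blk_disj bl_props that Suc.prems by auto
    qed
    then show ?thesis using IH blk(5)[OF b(1)] by auto
  qed
  have "?E \<inter> ?U \<subseteq> pl ?N" using NU b by (auto simp: Ed_def)
  moreover have "card (?E \<inter> ?U) = m" using EU j(2) by simp
  ultimately have q: "?E \<inter> ?U = pl ?N" using eq_by_card[OF Pl_fin[OF b(1)]] Pl_card[OF b(1)] by simp
  have "take (Suc (Suc i)) Es = take (Suc i) Es @ [?E]" using Suc.prems by (simp add: take_Suc_conv_app_nth)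
  then have "\<Union>(set (take (Suc (Suc i)) Es)) = ?U \<union> ?E" by auto
  also have "\<dots> = ?U \<union> ?N" using q b by (auto simp: Ed_def)
  also have "\<dots> = R \<union> \<Union>(bl ` {..Suc i})" using IH by (auto simp: atMost_Suc)
  finally show ?case using q by (simp add: Qf_def)
qed

lemma pi_eq: "\<pi> = bl ` {..<length Es}"
proof
  show "bl ` {..<length Es} \<subseteq> \<pi>" using bl_props by auto
  show "\<pi> \<subseteq> bl ` {..<length Es}"
  proof
    fix N assume N: "N \<in> \<pi>"
    then have "ed N \<in> set Es" using Es_set by auto
    then obtain i where i: "i < length Es" "Es ! i = ed N" by (auto simp: in_set_conv_nth)
    then have "bl i = N" using bl_props[OF i(1)] Ed_inj N by (auto simp: inj_on_def)
    then show "N \<in> bl ` {..<length Es}" using i by auto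
  qed
qed

lemma bl_eq: "i < length Es \<Longrightarrow> bl i = Es ! i - Qf i"
  using QP bl_props pl_ed_blk by metis

lemma order_lemma:
  assumes i: "i < length Es" and j: "j < length Es" and ne: "i \<noteq> j" and c: "bl i \<inter> Es ! j \<noteq> {}"
  shows "i < j"
proof -
  have bi: "bl i \<in> \<pi>" and bj: "bl j \<in> \<pi>" "ed (bl j) = Es ! j" using bl_props i j by auto
  have nb: "bl i \<noteq> bl j" using bl_inj i j ne by auto
  then have "bl i \<inter> bl j = {}" using blk_disj bi bj by auto
  then obtain v where v: "v \<in> bl i" "v \<in> pl (bl j)" using c bj by (auto simp: Ed_def)
  show ?thesis
  proof (cases j)
    case 0
    then have "pl (bl j) = R" using QP[OF j] by (simp add: Qf_def)
    then show ?thesis using v blk(5)[OF bi] by auto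
  next
    case (Suc j')
    have "pl (bl j) = Qf j" using QP[OF j] by simp
    also have "\<dots> \<subseteq> \<Union>(set (take (Suc j') Es))" using Suc by (simp add: Qf_def)
    also have "\<dots> = R \<union> \<Union>(bl ` {..j'})" using QP[of j'] Suc j by simp
    finally have "v \<in> R \<union> \<Union>(bl ` {..j'})" using v by auto
    then obtain h where h: "h \<le> j'" "v \<in> bl h" using v blk(5)[OF bi] by auto
    have "h < length Es" using h Suc j by simp
    then have "bl h = bl i" using h v blk_disj bl_props i by blast
    then have "h = i" using bl_inj i \<open>h < length Es\<close> by auto
    then show ?thesis using h Suc by simp
  qed
qed

end

context ST
begin

lemma DT_I: "(\<pi>, g, f) \<in> D \<Longrightarrow> DT k m H e \<pi> g f"
  by (simp add: DT_def DT_axioms_def ST_axioms)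

lemma cfree_ext: "h \<in> cfree A B C \<gamma> \<Longrightarrow> x \<notin> A \<Longrightarrow> h x = undefined"
  by (auto simp: cfree_def PiE_def extensional_def)

lemma Phi_inj:
  assumes d1: "(\<pi>1, g1, f1) \<in> D" and d2: "(\<pi>2, g2, f2) \<in> D"
    and eq: "Phi \<pi>1 g1 f1 = Phi \<pi>2 g2 f2"
  shows "(\<pi>1, g1, f1) = (\<pi>2, g2, f2)"
proof -
  interpret A: DT k m H e \<pi>1 g1 f1 by (rule DT_I[OF d1])
  interpret B: DT k m H e \<pi>2 g2 f2 by (rule DT_I[OF d2])
  have T: "A.ed ` \<pi>1 = B.ed ` \<pi>2" using eq by (simp add: Phi_def)
  obtain bs where bs: "distinct bs" "set bs = \<pi>1" "sorted (map A.dep bs)" using A.ex_bs by blast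
  define Es where "Es = map A.ed bs"
  have Eprops: "distinct Es" "set Es = A.ed ` \<pi>1" "Es \<noteq> []" "R \<subseteq> Es ! 0"
    "\<forall>i. 1 \<le> i \<and> i < length Es \<longrightarrow>
        (\<exists>j<i. card (Es ! i \<inter> Es ! j) = m \<and> (Es ! i - Es ! j) \<inter> \<Union>(set (take i Es)) = {})"
  proof -
    show "distinct Es" using bs A.Ed_inj by (simp add: Es_def distinct_map)
    show "set Es = A.ed ` \<pi>1" using bs by (simp add: Es_def)
    show ne: "Es \<noteq> []" using A.bs0_root[OF bs] by (simp add: Es_def)
    have "A.pl (bs ! 0) = R" using A.bs0_root[OF bs] by simp
    then show "R \<subseteq> Es ! 0" using ne by (auto simp: Es_def Ed_def)
    show "\<forall>i. 1 \<le> i \<and> i < length Es \<longrightarrow>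
        (\<exists>j<i. card (Es ! i \<inter> Es ! j) = m \<and> (Es ! i - Es ! j) \<inter> \<Union>(set (take i Es)) = {})"
      using A.valid_Es[OF bs] by (simp add: Es_def)
  qed
  interpret A': DTE k m H e \<pi>1 g1 f1 Es
    by (rule DTE.intro[OF DT_I[OF d1]]) (unfold_locales, use Eprops in auto)
  interpret B': DTE k m H e \<pi>2 g2 f2 Es
    by (rule DTE.intro[OF DT_I[OF d2]]) (unfold_locales, use Eprops T in auto)
  have Qeq: "A'.Qf i = B'.Qf i" for i by (simp add: A'.Qf_def B'.Qf_def)
  have bleq: "i < length Es \<Longrightarrow> A'.bl i = B'.bl i" for i
    using A'.bl_eq B'.bl_eq Qeq by simp
  have pieq: "\<pi>1 = \<pi>2" using A'.pi_eq B'.pi_eq bleq by auto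
  have pleq: "A.pl N = B.pl N" if N: "N \<in> \<pi>1" for N
  proof -
    obtain i where i: "i < length Es" "N = A'.bl i" using A'.pi_eq N by auto
    then show ?thesis using A'.QP[OF i(1)] B'.QP[OF i(1)] bleq[OF i(1)] Qeq by simp
  qed
  have edeq: "A.ed N = B.ed N" if N: "N \<in> \<pi>1" for N using pleq[OF N] by (simp add: Ed_def)
  have hseq: "A.hs N = B.hs N" if N: "N \<in> \<pi>1" for N
  proof -
    have "A.hs N = snd (Phi \<pi>1 g1 f1) (A.ed N)" using A.Phi_snd[OF N] by simp
    also have "\<dots> = snd (Phi \<pi>2 g2 f2) (B.ed N)" using eq edeq[OF N] by simp
    also have "\<dots> = B.hs N" using B.Phi_snd N pieq by simp
    finally show ?thesis .
  qed
  have geq: "g1 = g2"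
  proof
    fix N show "g1 N = g2 N"
    proof (cases "N \<in> \<pi>1")
      case True
      then show ?thesis using A.g_from_hs[OF True] B.g_from_hs True pieq hseq pleq by simp
    next
      case False
      then show ?thesis using A.parts(2) B.parts(2) pieq by (auto simp: PiE_def extensional_def)
    qed
  qed
  have feq: "f1 = f2"
  proof
    fix N show "f1 N = f2 N"
    proof (cases "N \<in> \<pi>1")
      case False
      then show ?thesis using cfree_ext[OF A.parts(3)] cfree_ext[OF B.parts(3)] pieq by simp
    next
      case True
      have N2: "N \<in> \<pi>2" using True pieq by simp
      show ?thesis
      proof (cases "f1 N")
        case None
        then have "A.pl N = R" using A.Pl_None[OF True] by simp
        then have "B.pl N = R" using pleq[OF True] by simp
        then show ?thesis using B.Pl_R_iff[OF N2] None by simp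
      next
        case (Some a)
        then obtain N1 L1 where fs1: "f1 N = Some (N1, L1)" by (cases a) auto
        then have "A.pl N \<noteq> R" using A.parent_facts(5)[OF True] by simp
        then have "B.pl N \<noteq> R" using pleq[OF True] by simp
        then have "f2 N \<noteq> None" using B.Pl_R_iff[OF N2] by simp
        then obtain N2' L2 where fs2: "f2 N = Some (N2', L2)" by (cases "f2 N") auto
        note pa = A.parent_facts[OF True fs1] and pb = B.parent_facts[OF N2 fs2]
        have "N1 = N2'"
        proof (rule ccontr)
          assume ne: "N1 \<noteq> N2'"
          obtain i1 where i1: "i1 < length Es" "N1 = A'.bl i1" using A'.pi_eq pa(1) by auto
          obtain i2 where i2: "i2 < length Es" "N2' = A'.bl i2" using A'.pi_eq pb(1) pieq by auto
          have ine: "i1 \<noteq> i2" using ne i1 i2 by auto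
          have e2: "Es ! i2 = A.ed N2'" using A'.bl_props[OF i2(1)] i2 by simp
          have e1: "Es ! i1 = A.ed N1" using A'.bl_props[OF i1(1)] i1 by simp
          have "A.pl N \<subseteq> A.ed N2'" using pb(2) pleq[OF True] edeq pb(1) pieq by simp
          then have "A'.bl i1 \<inter> Es ! i2 \<noteq> {}" using pa(4) i1 e2 by auto
          then have "i1 < i2" using A'.order_lemma[OF i1(1) i2(1) ine] by simp
          moreover have "A.pl N \<subseteq> A.ed N1" using pa(2) .
          then have "A'.bl i2 \<inter> Es ! i1 \<noteq> {}"
            using pb(4) pleq[OF True] i2 e1 by auto
          then have "i2 < i1" using A'.order_lemma[OF i2(1) i1(1) ine[symmetric]] by simp
          ultimately show False by simp
        qed
        moreover have "L1 = L2" using pa(8) pb(8) \<open>N1 = N2'\<close> pleq[OF True] pleq[OF pa(1)] by simp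
        ultimately show ?thesis using fs1 fs2 by simp
      qed
    qed
  qed
  show ?thesis using pieq geq feq by simp
qed

end

definition validm :: "nat \<Rightarrow> nat set list \<Rightarrow> bool" where
  "validm m Es = (\<forall>i. 1 \<le> i \<and> i < length Es \<longrightarrow>
     (\<exists>j<i. card (Es ! i \<inter> Es ! j) = m \<and> (Es ! i - Es ! j) \<inter> \<Union>(set (take i Es)) = {}))"

lemma validm_prefix: "validm m (xs @ [x]) \<Longrightarrow> validm m xs"
  unfolding validm_def
proof (intro allI impI)
  fix i assume v: "\<forall>i. 1 \<le> i \<and> i < length (xs @ [x]) \<longrightarrow>
     (\<exists>j<i. card ((xs @ [x]) ! i \<inter> (xs @ [x]) ! j) = m \<and>
        ((xs @ [x]) ! i - (xs @ [x]) ! j) \<inter> \<Union>(set (take i (xs @ [x]))) = {})"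
    and i: "1 \<le> i \<and> i < length xs"
  then obtain j where j: "j < i" "card ((xs @ [x]) ! i \<inter> (xs @ [x]) ! j) = m"
    "((xs @ [x]) ! i - (xs @ [x]) ! j) \<inter> \<Union>(set (take i (xs @ [x]))) = {}" by fastforce
  then show "\<exists>j<i. card (xs ! i \<inter> xs ! j) = m \<and> (xs ! i - xs ! j) \<inter> \<Union>(set (take i xs)) = {}"
    using i by (intro exI[of _ j]) (auto simp: nth_append)
qed

lemma validm_last:
  assumes "validm m (xs @ [x])" "xs \<noteq> []"
  shows "\<exists>j<length xs. card (x \<inter> xs ! j) = m \<and> (x - xs ! j) \<inter> \<Union>(set xs) = {}"
proof -
  have l: "1 \<le> length xs \<and> length xs < length (xs @ [x])" using assms(2) by (cases xs) auto
  have "\<exists>j<length xs. card ((xs @ [x]) ! length xs \<inter> (xs @ [x]) ! j) = m \<and>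
      ((xs @ [x]) ! length xs - (xs @ [x]) ! j) \<inter> \<Union>(set (take (length xs) (xs @ [x]))) = {}"
    using assms(1) l unfolding validm_def by blast
  then obtain j where j: "j < length xs" "card ((xs @ [x]) ! length xs \<inter> (xs @ [x]) ! j) = m"
      "((xs @ [x]) ! length xs - (xs @ [x]) ! j) \<inter> \<Union>(set (take (length xs) (xs @ [x]))) = {}"
    by blast
  have e1: "(xs @ [x]) ! length xs = x" by simp
  have e2: "(xs @ [x]) ! j = xs ! j" using j(1) by (simp add: nth_append)
  have e3: "take (length xs) (xs @ [x]) = xs" by simp
  show ?thesis using j unfolding e1 e2 e3 by blast
qed

lemma validm_snoc:
  assumes "validm m xs" "j < length xs" "card (x \<inter> xs ! j) = m" "(x - xs ! j) \<inter> \<Union>(set xs) = {}"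
  shows "validm m (xs @ [x])"
  unfolding validm_def
proof (intro allI impI)
  fix i assume i: "1 \<le> i \<and> i < length (xs @ [x])"
  show "\<exists>j<i. card ((xs @ [x]) ! i \<inter> (xs @ [x]) ! j) = m \<and>
        ((xs @ [x]) ! i - (xs @ [x]) ! j) \<inter> \<Union>(set (take i (xs @ [x]))) = {}"
  proof (cases "i < length xs")
    case True
    then obtain j' where "j' < i" "card (xs ! i \<inter> xs ! j') = m" "(xs ! i - xs ! j') \<inter> \<Union>(set (take i xs)) = {}"
      using assms(1) i unfolding validm_def by blast
    then show ?thesis using True by (intro exI[of _ j']) (auto simp: nth_append)
  next
    case False
    then have "i = length xs" using i by simp
    then show ?thesis using assms by (intro exI[of _ j]) (auto simp: nth_append)
  qed
qed

lemma validm_cons: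
  assumes v: "validm m xs" and ne: "xs \<noteq> []" and c: "card (xs ! 0 \<inter> x) = m"
    and sub: "\<And>A. A \<in> set xs \<Longrightarrow> A \<inter> x \<subseteq> xs ! 0"
  shows "validm m (x # xs)"
  unfolding validm_def
proof (intro allI impI)
  fix i assume i: "1 \<le> i \<and> i < length (x # xs)"
  show "\<exists>j<i. card ((x # xs) ! i \<inter> (x # xs) ! j) = m \<and>
        ((x # xs) ! i - (x # xs) ! j) \<inter> \<Union>(set (take i (x # xs))) = {}"
  proof (cases "i = 1")
    case True
    then show ?thesis using c ne by (intro exI[of _ 0]) (auto simp: hd_conv_nth[symmetric] take_Suc)
  next
    case False
    then obtain i' where i': "i = Suc i'" "1 \<le> i'" "i' < length xs" using i by (cases i) auto
    then obtain j' where j': "j' < i'" "card (xs ! i' \<inter> xs ! j') = m" "(xs ! i' - xs ! j') \<inter> \<Union>(set (take i' xs)) = {}"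
      using v unfolding validm_def by blast
    have x0: "xs ! 0 \<in> set (take i' xs)" using i' ne by (auto simp: in_set_conv_nth intro!: exI[of _ 0])
    have "(xs ! i' - xs ! j') \<inter> x \<subseteq> (xs ! i' - xs ! j') \<inter> xs ! 0"
      using sub[of "xs ! i'"] i' by auto
    also have "\<dots> \<subseteq> (xs ! i' - xs ! j') \<inter> \<Union>(set (take i' xs))" using x0 by auto
    finally have "(xs ! i' - xs ! j') \<inter> x = {}" using j'(3) by auto
    then show ?thesis using j' i' by (intro exI[of _ "Suc j'"]) auto
  qed
qed

lemma reroot:
  "validm m Es \<Longrightarrow> distinct Es \<Longrightarrow> E \<in> set Es \<Longrightarrow>
   \<exists>Es'. validm m Es' \<and> distinct Es' \<and> set Es' = set Es \<and> Es' \<noteq> [] \<and> Es' ! 0 = E"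
proof (induction Es arbitrary: E rule: rev_induct)
  case Nil then show ?case by simp
next
  case (snoc x xs)
  have vx: "validm m xs" using validm_prefix snoc.prems(1) by blast
  have dx: "distinct xs" "x \<notin> set xs" using snoc.prems(2) by auto
  show ?case
  proof (cases "E \<in> set xs")
    case True
    obtain xs' where xs': "validm m xs'" "distinct xs'" "set xs' = set xs" "xs' \<noteq> []" "xs' ! 0 = E"
      using snoc.IH[OF vx dx(1) True] by blast
    have ne: "xs \<noteq> []" using True by auto
    obtain j0 where j0: "j0 < length xs" "card (x \<inter> xs ! j0) = m" "(x - xs ! j0) \<inter> \<Union>(set xs) = {}"
      using validm_last[OF snoc.prems(1) ne] by blast
    have "xs ! j0 \<in> set xs'" using j0 xs' by auto
    then obtain j' where j': "j' < length xs'" "xs' ! j' = xs ! j0" by (auto simp: in_set_conv_nth)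
    have "validm m (xs' @ [x])" by (rule validm_snoc[OF xs'(1) j'(1)]) (use j0 j' xs' in auto)
    then show ?thesis using xs' dx by (intro exI[of _ "xs' @ [x]"]) (auto simp: nth_append)
  next
    case False
    then have Ex: "E = x" using snoc.prems(3) by simp
    show ?thesis
    proof (cases "xs = []")
      case True
      then show ?thesis using Ex by (intro exI[of _ "[x]"]) (auto simp: validm_def)
    next
      case ne: False
      obtain j0 where j0: "j0 < length xs" "card (x \<inter> xs ! j0) = m" "(x - xs ! j0) \<inter> \<Union>(set xs) = {}"
        using validm_last[OF snoc.prems(1) ne] by blast
      have mem: "xs ! j0 \<in> set xs" using j0(1) by simp
      obtain xs' where xs': "validm m xs'" "distinct xs'" "set xs' = set xs" "xs' \<noteq> []" "xs' ! 0 = xs ! j0"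
        using snoc.IH[OF vx dx(1) mem] by blast
      have "validm m (x # xs')"
      proof (rule validm_cons[OF xs'(1) xs'(4)])
        show "card (xs' ! 0 \<inter> x) = m" using j0 xs' by (simp add: Int_commute)
        show "\<And>A. A \<in> set xs' \<Longrightarrow> A \<inter> x \<subseteq> xs' ! 0" using j0(3) xs'(3,5) by blast
      qed
      then show ?thesis using xs' dx Ex by (intro exI[of _ "x # xs'"]) auto
    qed
  qed
qed

locale YT = ST +
  fixes T :: "nat set set" and Hs :: "nat set \<Rightarrow> nat set set" and Es :: "nat set list"
  assumes hbt: "H_built_tree k m H n T Hs" and cT: "card T = e"
    and Es_v: "validm m Es" and Es_d: "distinct Es" and Es_s: "set Es = T"
    and Es_ne: "Es \<noteq> []" and root0: "R \<in> Hs (Es ! 0)"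
begin

lemma T_km: "km_tree k m n T" using hbt by (simp add: H_built_tree_def)
lemma T_hg: "E \<in> T \<Longrightarrow> H_graph_on k H E (Hs E)" using hbt by (simp add: H_built_tree_def)
lemma T_out: "E \<notin> T \<Longrightarrow> Hs E = {}" using hbt by (simp add: H_built_tree_def)
lemma T_pair: "E \<in> T \<Longrightarrow> E' \<in> T \<Longrightarrow> E \<noteq> E' \<Longrightarrow> card (E \<inter> E') = m \<Longrightarrow> E \<inter> E' \<in> Hs E \<and> E \<inter> E' \<in> Hs E'"
  using hbt by (simp add: H_built_tree_def)
lemma T_rg: "E \<in> T \<Longrightarrow> E \<subseteq> {1..n} \<and> card E = k"
  using T_km by (simp add: km_tree_def rgraph_def)
lemma T_union: "\<Union>T = {1..n}" using T_km by (simp add: km_tree_def)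
lemma len: "length Es = e" using Es_d Es_s cT distinct_card by metis
lemma E_in: "i < length Es \<Longrightarrow> Es ! i \<in> T" using Es_s nth_mem by blast
lemma E_fin: "i < length Es \<Longrightarrow> finite (Es ! i)"
  using T_rg[OF E_in] by (meson finite_atLeastAtMost finite_subset)

lemma Hs_bij: "E \<in> T \<Longrightarrow> \<exists>\<sigma>. bij_betw \<sigma> {1..k} E \<and> Hs E = img \<sigma> H"
  using T_hg by (auto simp: H_graph_on_def img_def)

lemma Hs_elem: "E \<in> T \<Longrightarrow> L \<in> Hs E \<Longrightarrow> L \<subseteq> E \<and> card L = m"
proof -
  assume E: "E \<in> T" and L: "L \<in> Hs E"
  obtain \<sigma> where s: "bij_betw \<sigma> {1..k} E" "Hs E = img \<sigma> H" using Hs_bij[OF E] by blast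
  obtain L0 where L0: "L0 \<in> H" "L = \<sigma> ` L0" using L s(2) by (auto simp: img_def)
  have L0k: "L0 \<subseteq> {1..k}" "card L0 = m" using Hk L0(1) by (auto simp: rgraph_def)
  have "L \<subseteq> E" using L0 L0k s(1) by (auto simp: bij_betw_def)
  moreover have "inj_on \<sigma> L0" using s(1) L0k unfolding bij_betw_def by (blast intro: inj_on_subset)
  then have "card L = m" using L0 L0k by (simp add: card_image)
  ultimately show ?thesis by simp
qed

definition Qy where "Qy i = (if i = 0 then R else Es ! i \<inter> \<Union>(set (take i Es)))"
definition bq where "bq i = Es ! i - Qy i"

lemma R_sub0: "R \<subseteq> Es ! 0"
  using Hs_elem[OF E_in root0] Es_ne by auto

lemma take_mem: "j < i \<Longrightarrow> i < length Es \<Longrightarrow> Es ! j \<in> set (take i Es)"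
  by (auto simp: in_set_conv_nth intro!: exI[of _ j])

lemma attach_y:
  assumes i: "1 \<le> i" "i < length Es"
  shows "\<exists>j<i. Qy i = Es ! i \<inter> Es ! j \<and> card (Qy i) = m"
proof -
  obtain j where j: "j < i" "card (Es ! i \<inter> Es ! j) = m" "(Es ! i - Es ! j) \<inter> \<Union>(set (take i Es)) = {}"
    using Es_v i unfolding validm_def by blast
  have "Es ! j \<subseteq> \<Union>(set (take i Es))" using take_mem[OF j(1) i(2)] by auto
  then have "Es ! i \<inter> \<Union>(set (take i Es)) = Es ! i \<inter> Es ! j" using j(3) by blast
  then show ?thesis using j i by (intro exI[of _ j]) (simp add: Qy_def)
qed

lemma Qy_props: "i < length Es \<Longrightarrow> Qy i \<subseteq> Es ! i \<and> card (Qy i) = m \<and> finite (Qy i)"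
proof -
  assume i: "i < length Es"
  show ?thesis
  proof (cases i)
    case 0 then show ?thesis using R_sub0 by (simp add: Qy_def)
  next
    case (Suc i')
    then obtain j where "Qy i = Es ! i \<inter> Es ! j" "card (Qy i) = m" using attach_y i by fastforce
    then show ?thesis using E_fin[OF i] by auto
  qed
qed

lemma Uy: "i < length Es \<Longrightarrow> \<Union>(set (take (Suc i) Es)) = R \<union> \<Union>(bq ` {..i})"
proof (induction i)
  case 0
  have "take (Suc 0) Es = [Es ! 0]" using Es_ne by (cases Es) auto
  then show ?case using R_sub0 by (auto simp: bq_def Qy_def)
next
  case (Suc i)
  have "take (Suc (Suc i)) Es = take (Suc i) Es @ [Es ! Suc i]" using Suc.prems by (simp add: take_Suc_conv_app_nth)
  then have "\<Union>(set (take (Suc (Suc i)) Es)) = \<Union>(set (take (Suc i) Es)) \<union> Es ! Suc i" by auto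
  also have "Es ! Suc i = Qy (Suc i) \<union> bq (Suc i)" using Qy_props[OF Suc.prems] by (auto simp: bq_def)
  also have "Qy (Suc i) \<subseteq> \<Union>(set (take (Suc i) Es))" by (simp add: Qy_def)
  then have "\<Union>(set (take (Suc i) Es)) \<union> (Qy (Suc i) \<union> bq (Suc i)) = \<Union>(set (take (Suc i) Es)) \<union> bq (Suc i)" by auto
  also have "\<dots> = R \<union> \<Union>(bq ` {..Suc i})" using Suc by (auto simp: atMost_Suc)
  finally show ?case .
qed

lemma bq_disj_prev: "i < length Es \<Longrightarrow> bq i \<inter> (R \<union> \<Union>(bq ` {..<i})) = {}"
proof (cases i)
  case 0 then show ?thesis by (auto simp: bq_def Qy_def)
next
  case (Suc i')
  assume i: "i < length Es"
  have "\<Union>(set (take i Es)) = R \<union> \<Union>(bq ` {..i'})" using Uy[of i'] Suc i by simp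
  moreover have "{..i'} = {..<i}" using Suc by auto
  moreover have "bq i \<inter> \<Union>(set (take i Es)) = {}" using Suc by (auto simp: bq_def Qy_def)
  ultimately show ?thesis by simp
qed

lemma bq_props: "i < length Es \<Longrightarrow> card (bq i) = d \<and> finite (bq i) \<and> bq i \<subseteq> W \<and> bq i \<noteq> {}"
proof -
  assume i: "i < length Es"
  have q: "Qy i \<subseteq> Es ! i" "card (Qy i) = m" "finite (Qy i)" using Qy_props[OF i] by auto
  have "card (bq i) = card (Es ! i) - card (Qy i)" unfolding bq_def using q by (simp add: card_Diff_subset)
  then have c: "card (bq i) = d" using T_rg[OF E_in[OF i]] q by simp
  have f: "finite (bq i)" using E_fin[OF i] by (simp add: bq_def)
  have bR: "bq i \<inter> R = {}" using bq_disj_prev[OF i] by auto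
  have sub: "Es ! i \<subseteq> {1..n}" using T_rg[OF E_in[OF i]] by blast
  have sub2: "bq i \<subseteq> {1..n}" using sub by (auto simp: bq_def)
  have "bq i \<subseteq> W"
  proof
    fix x assume x: "x \<in> bq i"
    then have a: "1 \<le> x \<and> x \<le> n" using sub2 by auto
    have "x \<notin> R" using bR x by auto
    then have "\<not> x \<le> m" using a by auto
    then show "x \<in> W" using a by simp
  qed
  moreover have "bq i \<noteq> {}" using c d1 by auto
  ultimately show ?thesis using c f by simp
qed

lemma bq_disj: "i < length Es \<Longrightarrow> j < length Es \<Longrightarrow> i \<noteq> j \<Longrightarrow> bq i \<inter> bq j = {}"
proof -
  assume ij: "i < length Es" "j < length Es" "i \<noteq> j"
  show ?thesis
  proof (cases "j < i")
    case True then show ?thesis using bq_disj_prev[OF ij(1)] by auto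
  next
    case False then have "i < j" using ij by simp
    then show ?thesis using bq_disj_prev[OF ij(2)] by auto
  qed
qed

lemma bq_inj: "i < length Es \<Longrightarrow> j < length Es \<Longrightarrow> bq i = bq j \<Longrightarrow> i = j"
  using bq_disj bq_props by fastforce

lemma Es_split: "i < length Es \<Longrightarrow> Es ! i = Qy i \<union> bq i \<and> Qy i \<inter> bq i = {}"
  using Qy_props by (auto simp: bq_def)

definition piy where "piy = bq ` {..<length Es}"

lemma piy_part: "piy \<in> part W d"
  unfolding part_def
proof (intro CollectI conjI)
  show "\<forall>N\<in>piy. N \<subseteq> W \<and> card N = d" using bq_props by (auto simp: piy_def)
  show "\<forall>N\<in>piy. \<forall>N'\<in>piy. N \<noteq> N' \<longrightarrow> N \<inter> N' = {}" using bq_disj by (auto simp: piy_def)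
  show "\<Union>piy = W"
  proof
    show "\<Union>piy \<subseteq> W" using bq_props by (auto simp: piy_def)
    have l: "length Es - 1 < length Es" using Es_ne by simp
    have "{..length Es - 1} = {..<length Es}" using Es_ne by (cases Es) auto
    then have "\<Union>(set Es) = R \<union> \<Union>piy" using Uy[OF l] Es_ne by (simp add: piy_def)
    then have eq: "{1..n} = R \<union> \<Union>piy" using T_union Es_s by simp
    show "W \<subseteq> \<Union>piy"
    proof
      fix x assume x: "x \<in> W"
      then have "x \<in> {1..n}" by auto
      then have "x \<in> R \<union> \<Union>piy" using eq by blast
      moreover have "x \<notin> R" using x by auto
      ultimately show "x \<in> \<Union>piy" by blast
    qed
  qed
qed

definition posy where "posy N = (THE i. i < length Es \<and> bq i = N)"

lemma posy: "i < length Es \<Longrightarrow> posy (bq i) = i"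
  unfolding posy_def by (rule the_equality) (use bq_inj in auto)

lemma Qy_in_Hs: "i < length Es \<Longrightarrow> Qy i \<in> Hs (Es ! i)"
proof (cases i)
  case 0 then show ?thesis using root0 by (simp add: Qy_def)
next
  case (Suc i')
  assume i: "i < length Es"
  obtain j where j: "j < i" "Qy i = Es ! i \<inter> Es ! j" "card (Qy i) = m" using attach_y i Suc by fastforce
  have "Es ! i \<noteq> Es ! j" using j(1) i nth_eq_iff_index_eq[OF Es_d] by auto
  then show ?thesis using T_pair[OF E_in[OF i] E_in] j i by auto
qed

definition pary where "pary i = (LEAST j. Qy i \<subseteq> Es ! j)"

lemma pary:
  assumes i: "1 \<le> i" "i < length Es"
  shows "pary i < i" "Qy i \<subseteq> Es ! pary i" "Es ! i \<inter> Es ! pary i = Qy i" "Qy i \<in> Hs (Es ! pary i)"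
proof -
  obtain j where j: "j < i" "Qy i = Es ! i \<inter> Es ! j" "card (Qy i) = m" using attach_y[OF i] by blast
  have qj: "Qy i \<subseteq> Es ! j" using j by auto
  have "Qy i \<subseteq> Es ! pary i" unfolding pary_def by (rule LeastI[of _ j]) (rule qj)
  moreover have "pary i \<le> j" unfolding pary_def by (rule Least_le) (rule qj)
  ultimately have "Qy i \<subseteq> Es ! pary i" "pary i \<le> j" by auto
  then show p: "pary i < i" "Qy i \<subseteq> Es ! pary i" using j by auto
  have "Es ! pary i \<subseteq> \<Union>(set (take i Es))" using take_mem[OF p(1) i(2)] by auto
  then have "Es ! i \<inter> Es ! pary i \<subseteq> Qy i" using i by (auto simp: Qy_def)
  then show eq: "Es ! i \<inter> Es ! pary i = Qy i" using p Qy_props[OF i(2)] by auto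
  have ne: "Es ! i \<noteq> Es ! pary i" using p(1) i nth_eq_iff_index_eq[OF Es_d] by auto
  have pl: "pary i < length Es" using p(1) i by simp
  have "card (Es ! i \<inter> Es ! pary i) = m" using eq j(3) by simp
  then have "Es ! i \<inter> Es ! pary i \<in> Hs (Es ! pary i)" using T_pair[OF E_in[OF i(2)] E_in[OF pl] ne] by simp
  then show "Qy i \<in> Hs (Es ! pary i)" using eq by simp
qed

lemma pary_ne:
  assumes i: "1 \<le> i" "i < length Es" and ne: "Qy i \<noteq> R"
  shows "Qy i \<noteq> Qy (pary i)"
proof
  assume eq: "Qy i = Qy (pary i)"
  show False
  proof (cases "pary i = 0")
    case True then show False using eq ne by (simp add: Qy_def)
  next
    case False
    have pl: "pary i < length Es" using pary(1)[OF i] i by simp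
    obtain j' where j': "j' < pary i" "Qy (pary i) = Es ! pary i \<inter> Es ! j'"
      using attach_y[of "pary i"] False pl by auto
    then have "Qy i \<subseteq> Es ! j'" using eq by auto
    then have "pary i \<le> j'" unfolding pary_def by (rule Least_le)
    then show False using j' by simp
  qed
qed

lemma ky:
  assumes i: "i < length Es"
  shows "bij_betw (kp (Qy i) (bq i)) {1..k} (Es ! i)" "kp (Qy i) (bq i) ` R = Qy i"
    "\<And>j. j \<in> {1..k} \<Longrightarrow> ki (Qy i) (bq i) (kp (Qy i) (bq i) j) = j"
    "\<And>x. x \<in> Es ! i \<Longrightarrow> kp (Qy i) (bq i) (ki (Qy i) (bq i) x) = x"
    "bij_betw (ki (Qy i) (bq i)) (Es ! i) {1..k}"
proof -
  have a: "finite (Qy i)" "finite (bq i)" "card (Qy i) = m" "card (bq i) = d" "Qy i \<inter> bq i = {}"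
    using Qy_props[OF i] bq_props[OF i] Es_split[OF i] by auto
  have sp: "Es ! i = Qy i \<union> bq i" using Es_split[OF i] by simp
  show "bij_betw (kp (Qy i) (bq i)) {1..k} (Es ! i)" using kp_bij(1)[OF a] sp by simp
  show "kp (Qy i) (bq i) ` R = Qy i" using kp_bij(2)[OF a] .
  show "\<And>j. j \<in> {1..k} \<Longrightarrow> ki (Qy i) (bq i) (kp (Qy i) (bq i) j) = j" using ki_kp(2)[OF a] .
  show "\<And>x. x \<in> Es ! i \<Longrightarrow> kp (Qy i) (bq i) (ki (Qy i) (bq i) x) = x" using ki_kp(3)[OF a] sp by simp
  show "bij_betw (ki (Qy i) (bq i)) (Es ! i) {1..k}" using ki_kp(1)[OF a] sp by simp
qed

lemma kiR: "i < length Es \<Longrightarrow> ki (Qy i) (bq i) ` Qy i = R"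
proof -
  assume i: "i < length Es"
  have "ki (Qy i) (bq i) ` Qy i = ki (Qy i) (bq i) ` (kp (Qy i) (bq i) ` R)"
    using ky(2)[OF i] by simp
  also have "\<dots> = (ki (Qy i) (bq i) \<circ> kp (Qy i) (bq i)) ` R" by (simp add: image_comp)
  also have "\<dots> = id ` R" by (rule image_cong[OF refl]) (use ky(3)[OF i] mk in auto)
  finally show ?thesis by simp
qed

definition gy where "gy N = img (ki (Qy (posy N)) N) (Hs (Es ! posy N))"
definition fy where "fy N = (if Qy (posy N) = R then None else
   Some (bq (pary (posy N)), ki (Qy (pary (posy N))) (bq (pary (posy N))) ` Qy (posy N)))"
definition gg where "gg = restrict gy piy"
definition ff where "ff = restrict fy piy"

lemma bq_piy: "i < length Es \<Longrightarrow> bq i \<in> piy" by (simp add: piy_def)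

lemma gy_bq: "i < length Es \<Longrightarrow> gy (bq i) = img (ki (Qy i) (bq i)) (Hs (Es ! i))"
  by (simp add: gy_def posy)

lemma gy_RH: "i < length Es \<Longrightarrow> gy (bq i) \<in> R_H k m H"
proof -
  assume i: "i < length Es"
  obtain \<sigma> where s: "bij_betw \<sigma> {1..k} (Es ! i)" "Hs (Es ! i) = img \<sigma> H" using Hs_bij[OF E_in[OF i]] by blast
  have "gy (bq i) = img (ki (Qy i) (bq i) \<circ> \<sigma>) H" using gy_bq[OF i] s by (simp add: img_comp)
  moreover have "bij_betw (ki (Qy i) (bq i) \<circ> \<sigma>) {1..k} {1..k}" using bij_betw_trans[OF s(1) ky(5)[OF i]] .
  ultimately have "H_graph_on k H {1..k} (gy (bq i))" by (auto simp: H_graph_on_def img_def)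
  moreover have "R \<in> gy (bq i)"
  proof -
    have "ki (Qy i) (bq i) ` Qy i \<in> img (ki (Qy i) (bq i)) (Hs (Es ! i))"
      unfolding img_def using Qy_in_Hs[OF i] by (rule imageI)
    then show ?thesis using kiR[OF i] gy_bq[OF i] by simp
  qed
  ultimately show ?thesis by (simp add: R_H_def)
qed

lemma Qy0: "Qy 0 = R" by (simp add: Qy_def)

lemma fy_Some:
  assumes i: "i < length Es" and ne: "Qy i \<noteq> R"
  shows "fy (bq i) = Some (bq (pary i), ki (Qy (pary i)) (bq (pary i)) ` Qy i)"
    "pary i < i" "ki (Qy (pary i)) (bq (pary i)) ` Qy i \<in> gy (bq (pary i))"
    "ki (Qy (pary i)) (bq (pary i)) ` Qy i \<noteq> R"
    "kp (Qy (pary i)) (bq (pary i)) ` (ki (Qy (pary i)) (bq (pary i)) ` Qy i) = Qy i"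
proof -
  have i1: "1 \<le> i" using ne Qy0 by (cases i) auto
  note pr = pary[OF i1 i]
  let ?p = "pary i"
  have pl: "?p < length Es" using pr(1) i by simp
  show "fy (bq i) = Some (bq ?p, ki (Qy ?p) (bq ?p) ` Qy i)" using ne by (simp add: fy_def posy[OF i])
  show "?p < i" by (rule pr(1))
  show "ki (Qy ?p) (bq ?p) ` Qy i \<in> gy (bq ?p)"
    unfolding gy_bq[OF pl] img_def using pr(4) by (rule imageI)
  show kk: "kp (Qy ?p) (bq ?p) ` (ki (Qy ?p) (bq ?p) ` Qy i) = Qy i"
  proof -
    have "kp (Qy ?p) (bq ?p) ` (ki (Qy ?p) (bq ?p) ` Qy i) = (kp (Qy ?p) (bq ?p) \<circ> ki (Qy ?p) (bq ?p)) ` Qy i"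
      by (simp add: image_comp)
    also have "\<dots> = id ` Qy i" by (rule image_cong[OF refl]) (use ky(4)[OF pl] pr(2) in auto)
    finally show ?thesis by simp
  qed
  show "ki (Qy ?p) (bq ?p) ` Qy i \<noteq> R"
  proof
    assume "ki (Qy ?p) (bq ?p) ` Qy i = R"
    then have "Qy i = kp (Qy ?p) (bq ?p) ` R" using kk by simp
    then have "Qy i = Qy ?p" using ky(2)[OF pl] by simp
    then show False using pary_ne[OF i1 i ne] by simp
  qed
qed

lemma fy_None: "i < length Es \<Longrightarrow> Qy i = R \<Longrightarrow> fy (bq i) = None"
  by (simp add: fy_def posy)

lemma reach_aux: "i < length Es \<Longrightarrow> \<exists>t. (stp ff gam (Bs piy gg) ^^ t) (ff (bq i)) = None"
proof (induction i rule: less_induct)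
  case (less i)
  have ffi: "ff (bq i) = fy (bq i)" using bq_piy[OF less.prems] by (simp add: ff_def)
  show ?case
  proof (cases "Qy i = R")
    case True then show ?thesis using fy_None[OF less.prems True] ffi by (intro exI[of _ 0]) simp
  next
    case False
    note fs = fy_Some[OF less.prems False]
    let ?p = "pary i" and ?L = "ki (Qy (pary i)) (bq (pary i)) ` Qy i"
    have pl: "?p < length Es" using fs(2) less.prems by simp
    have inB: "Some (bq ?p, ?L) \<in> Bs piy gg"
      using fs(3,4) bq_piy[OF pl] by (auto simp: Bs_def gg_def)
    obtain t where t: "(stp ff gam (Bs piy gg) ^^ t) (ff (bq ?p)) = None" using less.IH[OF fs(2) pl] by blast
    have "stp ff gam (Bs piy gg) (Some (bq ?p, ?L)) = ff (bq ?p)" using inB by (simp add: stp_def gam_def)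
    then have "(stp ff gam (Bs piy gg) ^^ Suc t) (ff (bq i)) = None"
      using t ffi fs(1) by (simp only: funpow_Suc_right')
    then show ?thesis by blast
  qed
qed

lemma in_D: "(piy, gg, ff) \<in> D"
proof -
  have g: "gg \<in> piy \<rightarrow>\<^sub>E R_H k m H" using gy_RH by (auto simp: gg_def piy_def)
  have fP: "ff \<in> piy \<rightarrow>\<^sub>E (Bs piy gg \<union> {None})"
  proof
    fix N assume N: "N \<in> piy"
    then obtain i where i: "i < length Es" "N = bq i" by (auto simp: piy_def)
    show "ff N \<in> Bs piy gg \<union> {None}"
    proof (cases "Qy i = R")
      case True then show ?thesis using fy_None[OF i(1)] i N by (simp add: ff_def)
    next
      case False
      note fs = fy_Some[OF i(1) False]
      have pl: "pary i < length Es" using fs(2) i by simp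
      show ?thesis using fs(1,3,4) bq_piy[OF pl] i N by (auto simp: ff_def Bs_def gg_def)
    qed
  next
    fix N assume "N \<notin> piy" then show "ff N = undefined" by (simp add: ff_def)
  qed
  have reach: "\<forall>b\<in>Bs piy gg. \<exists>t. (stp ff gam (Bs piy gg) ^^ t) b \<in> {None}"
  proof
    fix b assume b: "b \<in> Bs piy gg"
    then obtain N L where NL: "b = Some (N, L)" "N \<in> piy" by (auto simp: Bs_def)
    then obtain i where i: "i < length Es" "N = bq i" by (auto simp: piy_def)
    obtain t where t: "(stp ff gam (Bs piy gg) ^^ t) (ff (bq i)) = None" using reach_aux[OF i(1)] by blast
    have "stp ff gam (Bs piy gg) b = ff (bq i)" using b NL i by (simp add: stp_def gam_def)
    then have "(stp ff gam (Bs piy gg) ^^ Suc t) b = None" using t by (simp only: funpow_Suc_right')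
    then show "\<exists>t. (stp ff gam (Bs piy gg) ^^ t) b \<in> {None}" by blast
  qed
  show ?thesis using piy_part g fP reach by (simp add: D_def cfree_def)
qed

end

sublocale YT \<subseteq> Y: DT k m H e piy gg ff
  by (rule DT_I[OF in_D])

context YT
begin

lemma Pl_y: "i < length Es \<Longrightarrow> Y.pl (bq i) = Qy i"
proof (induction i rule: less_induct)
  case (less i)
  have ffi: "ff (bq i) = fy (bq i)" using bq_piy[OF less.prems] by (simp add: ff_def)
  show ?case
  proof (cases "Qy i = R")
    case True
    then show ?thesis using Y.Pl_None[OF bq_piy[OF less.prems]] fy_None[OF less.prems True] ffi by simp
  next
    case False
    note fs = fy_Some[OF less.prems False]
    have pl: "pary i < length Es" using fs(2) less.prems by simp
    have "Y.pl (bq i) = kp (Y.pl (bq (pary i))) (bq (pary i)) ` (ki (Qy (pary i)) (bq (pary i)) ` Qy i)"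
      using Y.Pl_Some[OF bq_piy[OF less.prems]] fs(1) ffi by simp
    also have "\<dots> = Qy i" using less.IH[OF fs(2) pl] fs(5) by simp
    finally show ?thesis .
  qed
qed

lemma Ed_y: "i < length Es \<Longrightarrow> Y.ed (bq i) = Es ! i"
  using Pl_y Es_split by (simp add: Ed_def)

lemma Phi_y: "Phi piy gg ff = (T, Hs)"
proof -
  have T1: "Y.ed ` piy = T"
  proof -
    have "Y.ed ` piy = (\<lambda>i. Es ! i) ` {..<length Es}" using Ed_y by (auto simp: piy_def image_image)
    also have "\<dots> = set Es" by (auto simp: in_set_conv_nth)
    finally show ?thesis using Es_s by simp
  qed
  have "snd (Phi piy gg ff) E = Hs E" for E
  proof (cases "E \<in> T")
    case True
    then obtain i where i: "i < length Es" "E = Es ! i" using Es_s by (auto simp: in_set_conv_nth)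
    have "snd (Phi piy gg ff) E = Y.hs (bq i)" using Y.Phi_snd[OF bq_piy[OF i(1)]] Ed_y[OF i(1)] i by simp
    also have "\<dots> = img (kp (Qy i) (bq i)) (img (ki (Qy i) (bq i)) (Hs (Es ! i)))"
      using Pl_y[OF i(1)] gy_bq[OF i(1)] bq_piy[OF i(1)] by (simp add: HsN_def gg_def)
    also have "\<dots> = img (kp (Qy i) (bq i) \<circ> ki (Qy i) (bq i)) (Hs (Es ! i))" by (simp add: img_comp)
    also have "\<dots> = img id (Hs (Es ! i))"
    proof (rule img_cong)
      fix x assume "x \<in> \<Union>(Hs (Es ! i))"
      then have "x \<in> Es ! i" using Hs_elem[OF E_in[OF i(1)]] by blast
      then show "(kp (Qy i) (bq i) \<circ> ki (Qy i) (bq i)) x = id x" using ky(4)[OF i(1)] by simp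
    qed
    finally show ?thesis using i by (simp add: img_id)
  next
    case False
    then show ?thesis using T1 T_out by (simp add: Phi_def)
  qed
  then show ?thesis using T1 by (simp add: Phi_def prod_eq_iff fun_eq_iff)
qed

end

context ST
begin

lemma Phi_surj:
  assumes y: "y \<in> Y"
  shows "\<exists>x\<in>D. (\<lambda>(\<pi>, g, f). Phi \<pi> g f) x = y"
proof -
  obtain T Hs where yT: "y = (T, Hs)" by (cases y)
  have hbt: "H_built_tree k m H n T Hs" and cT: "card T = e" and ro: "rooted_at T Hs R"
    using y yT by (auto simp: Y_def)
  obtain E0 where E0: "E0 \<in> T" "R \<in> Hs E0" using ro by (auto simp: rooted_at_def)
  have "km_tree k m n T" using hbt by (simp add: H_built_tree_def)
  then obtain Es0 where Es0: "distinct Es0" "set Es0 = T" "validm m Es0"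
    by (auto simp: km_tree_def validm_def)
  obtain Es where Es: "validm m Es" "distinct Es" "set Es = T" "Es \<noteq> []" "Es ! 0 = E0"
    using reroot[OF Es0(3,1)] E0 Es0(2) by blast
  interpret YY: YT k m H e T Hs Es
    by (rule YT.intro[OF ST_axioms]) (unfold_locales, use hbt cT Es E0 in auto)
  show ?thesis using YY.in_D YY.Phi_y yT by force
qed

theorem Phi_bij: "bij_betw (\<lambda>(\<pi>, g, f). Phi \<pi> g f) D Y"
proof (rule bij_betw_imageI)
  show "inj_on (\<lambda>(\<pi>, g, f). Phi \<pi> g f) D"
  proof (rule inj_onI)
    fix x y assume "x \<in> D" "y \<in> D" "(\<lambda>(\<pi>, g, f). Phi \<pi> g f) x = (\<lambda>(\<pi>, g, f). Phi \<pi> g f) y"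
    then show "x = y" using Phi_inj by (cases x, cases y) auto
  qed
  show "(\<lambda>(\<pi>, g, f). Phi \<pi> g f) ` D = Y"
  proof
    show "(\<lambda>(\<pi>, g, f). Phi \<pi> g f) ` D \<subseteq> Y"
    proof (rule image_subsetI)
      fix x assume x: "x \<in> D"
      obtain \<pi> g f where "x = (\<pi>, g, f)" by (cases x) auto
      then show "(\<lambda>(\<pi>, g, f). Phi \<pi> g f) x \<in> Y" using DT.Phi_in_Y[OF DT_I] x by simp
    qed
    show "Y \<subseteq> (\<lambda>(\<pi>, g, f). Phi \<pi> g f) ` D"
    proof
      fix y assume "y \<in> Y"
      then obtain x where x: "x \<in> D" "(\<lambda>(\<pi>, g, f). Phi \<pi> g f) x = y" using Phi_surj by blast
      show "y \<in> (\<lambda>(\<pi>, g, f). Phi \<pi> g f) ` D" using x by blast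
    qed
  qed
qed

end


lemma prod_fact:
  fixes d :: nat
  assumes d: "d \<ge> 1"
  shows "(\<Prod>j\<in>{1..e}. (j*d - 1) choose (d - 1)) * fact e * (fact d)^e = (fact (e*d) :: nat)"
proof (induction e)
  case 0 then show ?case by simp
next
  case (Suc e)
  obtain d' where d': "d = Suc d'" using d by (cases d) auto
  define N' where "N' = e * d + d'"
  have c: "fact d' * fact (e*d) * ((N') choose d') = (fact N' :: nat)"
    using binomial_fact_lemma[of d' N'] by (simp add: N'_def)
  have fd: "(fact d :: nat) = d * fact d'" using d' by simp
  have sN: "Suc e * d - 1 = N'" using d' by (simp add: N'_def)
  have fN: "(fact (Suc e * d) :: nat) = Suc e * d * fact N'"
  proof -
    have "Suc e * d = Suc N'" using d' by (simp add: N'_def)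
    then show ?thesis by (simp add: fact_Suc)
  qed
  have "(\<Prod>j\<in>{1..Suc e}. (j*d - 1) choose (d - 1)) * fact (Suc e) * (fact d)^(Suc e)
      = ((\<Prod>j\<in>{1..e}. (j*d - 1) choose (d - 1)) * fact e * (fact d)^e) * ((N' choose d') * Suc e * fact d)"
    using sN d' by (simp add: algebra_simps)
  also have "\<dots> = fact (e*d) * ((N' choose d') * Suc e * (d * fact d'))" using Suc.IH fd by simp
  also have "\<dots> = Suc e * d * (fact d' * fact (e*d) * (N' choose d'))" by (simp add: algebra_simps)
  also have "\<dots> = fact (Suc e * d)" using c fN by simp
  finally show ?case .
qed

lemma part_fin: "finite W \<Longrightarrow> finite (part W d)"
proof -
  assume "finite W"
  moreover have "part W d \<subseteq> Pow (Pow W)" by (auto simp: part_def)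
  ultimately show ?thesis by (meson finite_Pow_iff finite_subset)
qed

lemma part_card_e:
  assumes d: "d \<ge> 1" and fin: "finite W" and cW: "card W = e * d" and p: "\<pi> \<in> part W d"
  shows "card \<pi> = e"
proof -
  have blk: "\<forall>N\<in>\<pi>. N \<subseteq> W \<and> card N = d" and un: "\<Union>\<pi> = W"
    and dj: "\<forall>N\<in>\<pi>. \<forall>N'\<in>\<pi>. N \<noteq> N' \<longrightarrow> N \<inter> N' = {}" using p by (auto simp: part_def)
  have finp: "finite \<pi>" using part_fin[OF fin] p
  proof -
    have "\<pi> \<subseteq> Pow W" using blk by auto
    then show ?thesis using fin by (meson finite_Pow_iff finite_subset)
  qed
  have "card W = (\<Sum>N\<in>\<pi>. card N)"
    using un finp blk dj fin card_UN_disjoint[of \<pi> "\<lambda>x. x"] by (auto intro: finite_subset)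
  also have "\<dots> = d * card \<pi>" using blk by simp
  finally have "d * e = d * card \<pi>" using cW by (simp add: mult.commute)
  moreover have "d \<noteq> 0" using d by simp
  ultimately show ?thesis by simp
qed

lemma cff_iter:
  assumes f: "f \<in> A \<rightarrow>\<^sub>E (Inl ` B \<union> Inr ` C)" and g: "\<gamma> ` B \<subseteq> A"
  shows "y \<in> Inl ` B \<union> Inr ` C \<Longrightarrow>
    (cf_step f \<gamma> ^^ t) y = (stp f (\<gamma> \<circ> projl) (Inl ` B) ^^ t) y \<and>
    (stp f (\<gamma> \<circ> projl) (Inl ` B) ^^ t) y \<in> Inl ` B \<union> Inr ` C"
proof (induction t arbitrary: y)
  case 0 then show ?case by simp
next
  case (Suc t)
  have step: "cf_step f \<gamma> y = stp f (\<gamma> \<circ> projl) (Inl ` B) y \<and> stp f (\<gamma> \<circ> projl) (Inl ` B) y \<in> Inl ` B \<union> Inr ` C"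
  proof (cases y)
    case (Inl b)
    then have b: "b \<in> B" using Suc.prems by auto
    then have "f (\<gamma> b) \<in> Inl ` B \<union> Inr ` C" using f g by auto
    then show ?thesis using Inl b by (simp add: stp_def)
  next
    case (Inr c)
    then show ?thesis using Suc.prems by (auto simp: stp_def)
  qed
  show ?case using Suc.IH[of "stp f (\<gamma> \<circ> projl) (Inl ` B) y"] step
    by (simp only: funpow_Suc_right')
qed

lemma cff_eq:
  fixes \<gamma> :: "'b \<Rightarrow> 'a" and B :: "'b set" and C :: "'c set"
  assumes g: "\<gamma> ` B \<subseteq> A"
  shows "cycle_free_funs A B C \<gamma> = cfree A (Inl ` B) (Inr ` C) (\<gamma> \<circ> projl)"
proof (intro set_eqI iffI)
  fix f assume "f \<in> cycle_free_funs A B C \<gamma>"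
  then have f: "f \<in> A \<rightarrow>\<^sub>E (Inl ` B \<union> Inr ` C)" and r: "\<forall>b\<in>B. \<exists>t c. (cf_step f \<gamma> ^^ t) (Inl b) = Inr c"
    by (auto simp: cycle_free_funs_def)
  have "\<forall>y\<in>(Inl ` B :: ('b + 'c) set). \<exists>t. (stp f (\<gamma> \<circ> projl) (Inl ` B) ^^ t) y \<in> Inr ` C"
  proof
    fix y :: "'b + 'c" assume "y \<in> Inl ` B"
    then obtain b where b: "b \<in> B" "y = Inl b" by auto
    then obtain t c where tc: "(cf_step f \<gamma> ^^ t) (Inl b) = Inr c" using r by blast
    have "(stp f (\<gamma> \<circ> projl) (Inl ` B) ^^ t) y = Inr c \<and> Inr c \<in> Inl ` B \<union> Inr ` C"
      using cff_iter[OF f g, of y t] b tc by auto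
    then show "\<exists>t. (stp f (\<gamma> \<circ> projl) (Inl ` B) ^^ t) y \<in> Inr ` C" by auto
  qed
  then show "f \<in> cfree A (Inl ` B) (Inr ` C) (\<gamma> \<circ> projl)" using f by (simp add: cfree_def)
next
  fix f assume "f \<in> cfree A (Inl ` B) (Inr ` C) (\<gamma> \<circ> projl)"
  then have f: "f \<in> A \<rightarrow>\<^sub>E (Inl ` B \<union> Inr ` C)"
    and r: "\<forall>y\<in>Inl ` B. \<exists>t. (stp f (\<gamma> \<circ> projl) (Inl ` B) ^^ t) y \<in> Inr ` C"
    by (auto simp: cfree_def)
  have "\<forall>b\<in>B. \<exists>t c. (cf_step f \<gamma> ^^ t) (Inl b) = Inr c"
  proof
    fix b assume b: "b \<in> B"
    then obtain t where t: "(stp f (\<gamma> \<circ> projl) (Inl ` B) ^^ t) (Inl b) \<in> Inr ` C" using r by blast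
    have "(cf_step f \<gamma> ^^ t) (Inl b) = (stp f (\<gamma> \<circ> projl) (Inl ` B) ^^ t) (Inl b)"
      using cff_iter[OF f g, of "Inl b" t] b by auto
    then show "\<exists>t c. (cf_step f \<gamma> ^^ t) (Inl b) = Inr c" using t by (metis imageE)
  qed
  then show "f \<in> cycle_free_funs A B C \<gamma>" using f by (simp add: cycle_free_funs_def)
qed

lemma cff_card:
  fixes e l :: nat and c :: 'c
  assumes e: "e \<ge> 1"
  shows "card (cycle_free_funs {1..e} ({1..e} \<times> {1..l - 1}) {c} fst) = (1 + (l - 1) * e) ^ (e - 1)"
proof -
  have g: "fst ` ({1..e} \<times> {1..l - 1}) \<subseteq> {1..e}" by auto
  have "card (cycle_free_funs {1..e} ({1..e} \<times> {1..l - 1}) {c} fst)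
      = card (cfree {1..e} (Inl ` ({1..e} \<times> {1..l - 1})) (Inr ` {c}) (fst \<circ> projl))"
    by (simp only: cff_eq[OF g])
  also have "\<dots> = (if {1..e} = {} then 1 else card (Inr ` {c} :: (nat \<times> nat + 'c) set) *
      (card (Inr ` {c} :: (nat \<times> nat + 'c) set) + (l - 1) * card {1..e}) ^ (card {1..e} - 1))"
  proof (rule cfree_card)
    show "\<forall>a\<in>{1..e}. card {b \<in> (Inl ` ({1..e} \<times> {1..l - 1}) :: (nat \<times> nat + 'c) set). (fst \<circ> projl) b = a} = l - 1"
    proof
      fix a assume a: "a \<in> {1..e}"
      have "{b \<in> (Inl ` ({1..e} \<times> {1..l - 1}) :: (nat \<times> nat + 'c) set). (fst \<circ> projl) b = a} = Inl ` ({a} \<times> {1..l - 1})"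
        using a by auto
      moreover have "card (Inl ` ({a} \<times> {1..l - 1}) :: (nat \<times> nat + 'c) set) = l - 1"
        by (subst card_image) (auto simp: card_cartesian_product)
      ultimately show "card {b \<in> (Inl ` ({1..e} \<times> {1..l - 1}) :: (nat \<times> nat + 'c) set). (fst \<circ> projl) b = a} = l - 1"
        by simp
    qed
  qed auto
  also have "\<dots> = (1 + (l - 1) * e) ^ (e - 1)" using e by simp
  finally show ?thesis .
qed

context ST
begin

lemma part_pi: "\<pi> \<in> part W d \<Longrightarrow> finite \<pi> \<and> card \<pi> = e"
proof -
  assume p: "\<pi> \<in> part W d"
  have c: "card \<pi> = e" using part_card_e[OF d1 _ _ p] by simp
  then have "0 < card \<pi>" using e1 by simp
  then show ?thesis using c card_ge_0_finite by blast
qed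

lemma R_H_fin: "finite (R_H k m H)"
proof -
  have "R_H k m H \<subseteq> Pow (Pow {1..k})" using R_H_props(2) by blast
  then show ?thesis by (meson finite_Pow_iff finite_atLeastAtMost finite_subset)
qed

lemma Bs_fiber:
  assumes g: "g \<in> \<pi> \<rightarrow>\<^sub>E R_H k m H" and N: "N \<in> \<pi>"
  shows "card {b \<in> Bs \<pi> g. gam b = N} = card H - 1"
proof -
  have "{b \<in> Bs \<pi> g. gam b = N} = Some ` ({N} \<times> (g N - {R}))"
    using N by (auto simp: Bs_def gam_def)
  moreover have "card (Some ` ({N} \<times> (g N - {R}))) = card (g N - {R})"
    by (subst card_image) (auto simp: card_cartesian_product)
  moreover have "card (g N - {R}) = card H - 1"
  proof -
    have gN: "g N \<in> R_H k m H" using g N by auto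
    have "finite (g N)"
    proof -
      have "g N \<subseteq> Pow {1..k}" using R_H_props(2)[OF gN] by auto
      then show ?thesis by (meson finite_Pow_iff finite_atLeastAtMost finite_subset)
    qed
    then show ?thesis using R_H_props(1,3)[OF gN] by simp
  qed
  ultimately show ?thesis by simp
qed

lemma card_D: "card D = card (part W d) * card (R_H k m H) ^ e * (1 + (card H - 1) * e) ^ (e - 1)"
proof -
  have finW: "finite W" by simp
  have cW: "card W = e * d" by simp
  have fin_cf: "finite (cfree \<pi> (Bs \<pi> g) {None} gam)" if "\<pi> \<in> part W d" "g \<in> \<pi> \<rightarrow>\<^sub>E R_H k m H" for \<pi> g
  proof -
    have fp: "finite \<pi>" using part_pi[OF that(1)] by simp
    have fB: "finite (Bs \<pi> g)"
    proof -
      have "Bs \<pi> g \<subseteq> Some ` (\<pi> \<times> Pow {1..k})" using that R_H_props(2) by (fastforce simp: Bs_def)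
      moreover have "finite (Some ` (\<pi> \<times> Pow {1..k}))" using fp by simp
      ultimately show ?thesis by (rule finite_subset)
    qed
    have "cfree \<pi> (Bs \<pi> g) {None} gam \<subseteq> \<pi> \<rightarrow>\<^sub>E (Bs \<pi> g \<union> {None})" by (auto simp: cfree_def)
    then show ?thesis using fp fB by (meson finite_PiE finite_Un finite_insert finite.emptyI finite_subset)
  qed
  have inner: "card (cfree \<pi> (Bs \<pi> g) {None} gam) = (1 + (card H - 1) * e) ^ (e - 1)"
    if p: "\<pi> \<in> part W d" and g: "g \<in> \<pi> \<rightarrow>\<^sub>E R_H k m H" for \<pi> g
  proof -
    have cp: "card \<pi> = e" using part_pi[OF p] by simp
    have fp: "finite \<pi>" using part_pi[OF p] by simp
    have fB: "finite (Bs \<pi> g)"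
    proof -
      have "Bs \<pi> g \<subseteq> Some ` (\<pi> \<times> Pow {1..k})" using g R_H_props(2) by (fastforce simp: Bs_def)
      moreover have "finite (Some ` (\<pi> \<times> Pow {1..k}))" using fp by simp
      ultimately show ?thesis by (rule finite_subset)
    qed
    have "card (cfree \<pi> (Bs \<pi> g) {None} gam) = (if \<pi> = {} then 1 else card {None :: (nat set \<times> nat set) option} *
        (card {None :: (nat set \<times> nat set) option} + (card H - 1) * card \<pi>) ^ (card \<pi> - 1))"
    proof (rule cfree_card)
      show "Bs \<pi> g \<inter> {None} = {}" by (auto simp: Bs_def)
      show "gam ` Bs \<pi> g \<subseteq> \<pi>" by (auto simp: Bs_def gam_def)
      show "\<forall>a\<in>\<pi>. card {b \<in> Bs \<pi> g. gam b = a} = card H - 1" using Bs_fiber[OF g] by blast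
    qed (use fp fB in auto)
    also have "\<dots> = (1 + (card H - 1) * e) ^ (e - 1)" using cp e1 by (auto simp: add.commute)
    finally show ?thesis .
  qed
  have finPi: "finite (\<pi> \<rightarrow>\<^sub>E R_H k m H)" if "\<pi> \<in> part W d" for \<pi>
  proof -
    have "finite \<pi>" using part_pi[OF that] by simp
    then show ?thesis using R_H_fin by (intro finite_PiE) auto
  qed
  have "card D = (\<Sum>\<pi>\<in>part W d. card (SIGMA g:(\<pi> \<rightarrow>\<^sub>E R_H k m H). cfree \<pi> (Bs \<pi> g) {None} gam))"
    unfolding D_def using part_fin[OF finW] finPi fin_cf
    by (subst card_SigmaI) (auto intro!: finite_SigmaI)
  also have "\<dots> = (\<Sum>\<pi>\<in>part W d. \<Sum>g\<in>(\<pi> \<rightarrow>\<^sub>E R_H k m H). card (cfree \<pi> (Bs \<pi> g) {None} gam))"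
    using finPi fin_cf by (intro sum.cong refl card_SigmaI) auto
  also have "\<dots> = (\<Sum>\<pi>\<in>part W d. \<Sum>g\<in>(\<pi> \<rightarrow>\<^sub>E R_H k m H). (1 + (card H - 1) * e) ^ (e - 1))"
    using inner by (intro sum.cong refl) auto
  also have "\<dots> = (\<Sum>\<pi>\<in>part W d. card (R_H k m H) ^ e * (1 + (card H - 1) * e) ^ (e - 1))"
  proof (rule sum.cong[OF refl])
    fix \<pi> assume p: "\<pi> \<in> part W d"
    have cp: "card \<pi> = e" using part_pi[OF p] by simp
    have fp: "finite \<pi>" using part_pi[OF p] by simp
    show "(\<Sum>g\<in>(\<pi> \<rightarrow>\<^sub>E R_H k m H). (1 + (card H - 1) * e) ^ (e - 1)) = card (R_H k m H) ^ e * (1 + (card H - 1) * e) ^ (e - 1)"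
      using fp cp by (simp add: card_PiE)
  qed
  also have "\<dots> = card (part W d) * card (R_H k m H) ^ e * (1 + (card H - 1) * e) ^ (e - 1)" by simp
  finally show ?thesis .
qed

lemma D_fin: "finite D"
proof -
  have finW: "finite W" by simp
  have fin_cf: "finite (cfree \<pi> (Bs \<pi> g) {None} gam)" if "\<pi> \<in> part W d" "g \<in> \<pi> \<rightarrow>\<^sub>E R_H k m H" for \<pi> g
  proof -
    have fp: "finite \<pi>" using part_pi[OF that(1)] by simp
    have fB: "finite (Bs \<pi> g)"
    proof -
      have "Bs \<pi> g \<subseteq> Some ` (\<pi> \<times> Pow {1..k})" using that R_H_props(2) by (fastforce simp: Bs_def)
      moreover have "finite (Some ` (\<pi> \<times> Pow {1..k}))" using fp by simp
      ultimately show ?thesis by (rule finite_subset)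
    qed
    have "cfree \<pi> (Bs \<pi> g) {None} gam \<subseteq> \<pi> \<rightarrow>\<^sub>E (Bs \<pi> g \<union> {None})" by (auto simp: cfree_def)
    moreover have "finite (\<pi> \<rightarrow>\<^sub>E (Bs \<pi> g \<union> {None}))" using fp fB by (intro finite_PiE) auto
    ultimately show ?thesis by (rule finite_subset)
  qed
  have finPi: "finite (\<pi> \<rightarrow>\<^sub>E R_H k m H)" if "\<pi> \<in> part W d" for \<pi>
    using part_pi[OF that] R_H_fin by (intro finite_PiE) auto
  show ?thesis unfolding D_def using part_fin[OF finW] finPi fin_cf
    by (intro finite_SigmaI) auto
qed

lemma Aut_pos: "card (Aut k H) > 0"
proof -
  have "id \<in> Aut k H" by (simp add: Aut_def permutes_id)
  moreover have "finite (Aut k H)"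
  proof -
    have "Aut k H \<subseteq> {\<sigma>. \<sigma> permutes {1..k}}" by (auto simp: Aut_def)
    moreover have "finite {\<sigma>. \<sigma> permutes {1..k}}" by (rule finite_permutations) simp
    ultimately show ?thesis by (rule finite_subset)
  qed
  ultimately show ?thesis by (auto simp: card_gt_0_iff)
qed

lemma R_H_empty: "card H = 0 \<Longrightarrow> R_H k m H = {}"
proof (rule ccontr)
  assume h: "card H = 0" "R_H k m H \<noteq> {}"
  then obtain G where G: "G \<in> R_H k m H" by auto
  have "finite G"
  proof -
    have "G \<subseteq> Pow {1..k}" using R_H_props(2)[OF G] by auto
    then show ?thesis by (meson finite_Pow_iff finite_atLeastAtMost finite_subset)
  qed
  moreover have "card G = 0" using R_H_props(3)[OF G] h by simp
  ultimately have "G = {}" by simp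
  then show False using R_H_props(1)[OF G] by simp
qed

end

theorem theorem1:
  fixes k m e :: nat and H :: "nat set set"
  assumes "m \<le> k - 1" and "1 \<le> k" and "1 \<le> e"
    and "rgraph m {1..k} H"
  defines "l \<equiv> card H"
  defines "n \<equiv> e * (k - m) + m"
  defines "f \<equiv> real e * (real l - 1) + 1"
  defines "Y \<equiv> {(T, Hs). H_built_tree k m H n T Hs \<and> card T = e \<and> rooted_at T Hs {1..m}}"
  defines "A \<equiv> {1..e}"
  defines "B \<equiv> {1..e} \<times> {1..l - 1}"
  defines "C \<equiv> {{1..m}}"
  defines "\<gamma> \<equiv> (fst :: nat \<times> nat \<Rightarrow> nat)"
  defines "X \<equiv> (\<lambda>i. {1..((k - m) * (e - i + 1) - 1) choose (k - m - 1)})"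
  defines "Z \<equiv> cycle_free_funs A B C \<gamma> \<times> (\<Pi>\<^sub>E i\<in>{1..e}. X i \<times> R_H k m H)"
  shows "(\<exists>\<phi>. bij_betw \<phi> Y Z)
    \<and> real (card Y) = f ^ (e - 1)
          * (fact k * real l / (real (k choose m) * real (card (Aut k H)))) ^ e
          * (\<Prod>i=1..e. real (((k - m) * (e - i + 1) - 1) choose (k - m - 1)))
    \<and> f ^ (e - 1)
          * (fact k * real l / (real (k choose m) * real (card (Aut k H)))) ^ e
          * (\<Prod>i=1..e. real (((k - m) * (e - i + 1) - 1) choose (k - m - 1)))
      = fact (e * (k - m)) * f ^ (e - 1) / fact e * (fact m * real l / real (card (Aut k H))) ^ e"

proof -
  interpret S: ST k m H e by unfold_locales (use assms in auto)
  define d where "d = k - m"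
  define a where "a = card (R_H k m H)"
  define F0 where "F0 = 1 + (l - 1) * e"
  define PC where "PC = (\<Prod>i=1..e. ((k - m) * (e - i + 1) - 1) choose (k - m - 1))"
  have d1: "d \<ge> 1" using S.d1 by (simp add: d_def)
  have Yeq: "Y = S.Y" by (simp add: Y_def S.Y_def n_def)
  have finD: "finite S.D" by (rule S.D_fin)
  have bij1: "bij_betw (\<lambda>(\<pi>, g, f). S.Phi \<pi> g f) S.D Y" using S.Phi_bij Yeq by simp
  have finY: "finite Y" using bij_betw_finite[OF bij1] finD by simp
  have cardY: "card Y = card S.D" using bij_betw_same_card[OF bij1] by simp
  have cpart: "card (part S.W (k - m)) = PC"
  proof -
    have "card (part S.W (k - m)) = (\<Prod>j\<in>{1..e}. (j * (k - m) - 1) choose (k - m - 1))"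
      using part_card[OF S.d1, of S.W e] by simp
    also have "\<dots> = PC" unfolding PC_def using prod_rev_X[where e=e and dd="k - m"] by simp
    finally show ?thesis .
  qed
  have cY: "card Y = PC * a ^ e * F0 ^ (e - 1)"
    using cardY S.card_D cpart by (simp add: a_def F0_def l_def)
  have cff: "card (cycle_free_funs A B C \<gamma>) = F0 ^ (e - 1)"
    unfolding A_def B_def C_def \<gamma>_def F0_def using cff_card[OF assms(3), of l "{1..m}"] by simp
  have finR: "finite (R_H k m H)" by (rule S.R_H_fin)
  have finX: "finite (X i)" for i by (simp add: X_def)
  have cX: "card (X i) = ((k - m) * (e - i + 1) - 1) choose (k - m - 1)" for i by (simp add: X_def)
  have fincf: "finite (cycle_free_funs A B C \<gamma>)"
  proof -
    have "cycle_free_funs A B C \<gamma> \<subseteq> A \<rightarrow>\<^sub>E (Inl ` B \<union> Inr ` C)" by (auto simp: cycle_free_funs_def)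
    moreover have "finite (A \<rightarrow>\<^sub>E (Inl ` B \<union> Inr ` C))" by (intro finite_PiE) (auto simp: A_def B_def C_def)
    ultimately show ?thesis by (rule finite_subset)
  qed
  have finZ: "finite Z" unfolding Z_def using fincf finR finX by (intro finite_cartesian_product finite_PiE) auto
  have cZ: "card Z = F0 ^ (e - 1) * (PC * a ^ e)"
  proof -
    have "card Z = card (cycle_free_funs A B C \<gamma>) * (\<Prod>i\<in>{1..e}. card (X i) * a)"
      unfolding Z_def a_def using finR finX by (simp add: card_cartesian_product card_PiE)
    also have "(\<Prod>i\<in>{1..e}. card (X i) * a) = PC * a ^ e"
      by (simp add: prod.distrib cX PC_def)
    finally show ?thesis using cff by simp
  qed
  have cYZ: "card Y = card Z" using cY cZ by simp
  have part1: "\<exists>\<phi>. bij_betw \<phi> Y Z" using finite_same_card_bij[OF finY finZ cYZ] by blast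
  have RHc: "a * (k choose m) * card (Aut k H) = fact k * l"
    using R_H_card[OF assms(4)] by (simp add: a_def l_def)
  have Aut0: "card (Aut k H) > 0" by (rule S.Aut_pos)
  have cb0: "(k choose m) > 0" using assms(1,2) by simp
  have areal: "real a = fact k * real l / (real (k choose m) * real (card (Aut k H)))"
  proof -
    have "real a * real (k choose m) * real (card (Aut k H)) = fact k * real l"
      using arg_cong[OF RHc, of real] by (simp add: of_nat_mult)
    then show ?thesis using Aut0 cb0 by (simp add: field_simps)
  qed
  have part2: "real (card Y) = f ^ (e - 1)
          * (fact k * real l / (real (k choose m) * real (card (Aut k H)))) ^ e
          * (\<Prod>i=1..e. real (((k - m) * (e - i + 1) - 1) choose (k - m - 1)))"
  proof (cases "l = 0")
    case True
    then have "a = 0" using S.R_H_empty by (simp add: a_def l_def)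
    then show ?thesis using cY True assms(3) by simp
  next
    case False
    then have "real F0 = f" by (simp add: F0_def f_def of_nat_diff algebra_simps)
    then show ?thesis using cY areal by (simp add: PC_def)
  qed
  have part3: "f ^ (e - 1)
          * (fact k * real l / (real (k choose m) * real (card (Aut k H)))) ^ e
          * (\<Prod>i=1..e. real (((k - m) * (e - i + 1) - 1) choose (k - m - 1)))
      = fact (e * (k - m)) * f ^ (e - 1) / fact e * (fact m * real l / real (card (Aut k H))) ^ e"
  proof -
    have mk: "m \<le> k" using assms(1,2) by linarith
    have kb: "real (k choose m) = fact k / (fact m * fact (k - m))"
      using binomial_fact[OF mk] by simp
    have q1: "fact k * real l / (real (k choose m) * real (card (Aut k H)))
        = fact (k - m) * (fact m * real l / real (card (Aut k H)))"
    proof -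
      have c0: "real (k choose m) \<noteq> 0" using cb0 by simp
      have a0: "real (card (Aut k H)) \<noteq> 0" using Aut0 by simp
      have fk: "(fact k :: real) = fact m * fact (k - m) * real (k choose m)" using kb by (simp add: field_simps)
      show ?thesis unfolding fk using c0 a0 by (simp add: field_simps)
    qed
    have pf: "(\<Prod>j\<in>{1..e}. (j*(k - m) - 1) choose (k - m - 1)) * fact e * (fact (k - m))^e = (fact (e*(k - m)) :: nat)"
      using prod_fact[OF S.d1, of e] by simp
    have pr: "(\<Prod>i=1..e. real (((k - m) * (e - i + 1) - 1) choose (k - m - 1)))
        = fact (e * (k - m)) / (fact e * (fact (k - m))^e)"
    proof -
      have "(\<Prod>i=1..e. real (((k - m) * (e - i + 1) - 1) choose (k - m - 1)))
          = real (\<Prod>j\<in>{1..e}. (j*(k - m) - 1) choose (k - m - 1))"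
        using prod_rev_X[where e=e and dd="k - m"] by (simp flip: of_nat_prod)
      also have "\<dots> = fact (e * (k - m)) / (fact e * (fact (k - m))^e)"
      proof -
        have "real (\<Prod>j\<in>{1..e}. (j*(k - m) - 1) choose (k - m - 1)) * fact e * (fact (k - m))^e = fact (e*(k - m))"
          using arg_cong[OF pf, of real] by (simp add: of_nat_mult)
        then show ?thesis by (simp add: field_simps)
      qed
      finally show ?thesis .
    qed
    show ?thesis unfolding q1 pr by (simp add: power_mult_distrib field_simps)
  qed
  show ?thesis using part1 part2 part3 by simp
qed


end
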